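(* Let $k\geq3$. For all $n\geq k$, as an identity of rational functions in $v$, $$G_k(n;v)=f_{k-1}(n-1)+vf_{k-1}(n-2)-v(k-2)f_{k-1}(n-3)+\Bigl(\frac{v^2}{1-v}+(k-2)v\Bigr)G_k(n-2;v)-\frac{v^n}{1-v}\,g_k(n-2)+\frac{v^{n-1}}{1-v}\Bigl(k-2+\frac{v-v^{3-k}}{1-v}\Bigr)g_k(n-4),$$ and $G_k(n;v)=I_{n-1}+\frac{v-v^n}{1-v}I_{n-2}$ for all $n=1,\ldots,k-1$ (for $n=1$ the second term is $0$).
   Context: $\mathcal{A}_k=\{\sigma\in\mathfrak{S}_k:\sigma_1=1,\sigma_2=2\}$, $\mathcal{F}_k=\{\sigma\in\mathfrak{S}_k:\sigma_1=1\}$. $\mathcal{I}_n(T)$ is the set of involutions of $[n]$ avoiding every pattern in $T$; $\mathcal{I}_0(T)$ is the empty permutation. $I_n$ is the number of involutions of $[n]$ ($I_0=1$). $g_k(n)=|\mathcal{I}_n(\mathcal{A}_k)|$ for $n\ge0$ (so $g_k(0)=1$), with the convention $g_k(m)=0$ for $m<0$; $g_k(n;t)=\#\{\pi\in\mathcal{I}_n(\mathcal{A}_k):\pi_1=t\}$; $f_{k-1}(m)=|\mathcal{I}_m(\mathcal{F}_{k-1})|$ ($f_{k-1}(0)=1$). $G_k(n;v)=\sum_{t=1}^n g_k(n;t)v^{t-1}$. *)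

theory Defs
  imports Complex_Main
begin

text \<open>Permutations of [n] are represented in one-line notation as lists:
  the list p represents the permutation with p_(i+1) = p ! i.\<close>

definition perms :: "nat \<Rightarrow> nat list set" where
  "perms n = {p. distinct p \<and> set p = {1..n}}"

definition contains :: "nat list \<Rightarrow> nat list \<Rightarrow> bool" where
  "contains p s \<longleftrightarrow> (\<exists>idx :: nat \<Rightarrow> nat.
      (\<forall>a b. a < b \<and> b < length s \<longrightarrow> idx a < idx b) \<and>
      (\<forall>a < length s. idx a < length p) \<and>
      (\<forall>a < length s. \<forall>b < length s. (p ! idx a < p ! idx b \<longleftrightarrow> s ! a < s ! b)))"

definition avoids :: "nat list \<Rightarrow> nat list set \<Rightarrow> bool" where
  "avoids p T \<longleftrightarrow> (\<forall>s\<in>T. \<not> contains p s)"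

definition involution :: "nat list \<Rightarrow> bool" where
  "involution p \<longleftrightarrow> (\<forall>i < length p. p ! (p ! i - 1) = i + 1)"

definition Acal :: "nat \<Rightarrow> nat list set" where
  "Acal k = {s \<in> perms k. s ! 0 = 1 \<and> s ! 1 = 2}"

definition Fcal :: "nat \<Rightarrow> nat list set" where
  "Fcal k = {s \<in> perms k. s ! 0 = 1}"

definition Ical :: "nat \<Rightarrow> nat list set \<Rightarrow> nat list set" where
  "Ical n T = {p \<in> perms n. involution p \<and> avoids p T}"

definition Inv :: "nat \<Rightarrow> nat" where
  "Inv n = card {p \<in> perms n. involution p}"

definition g :: "nat \<Rightarrow> nat \<Rightarrow> nat" where
  "g k n = card (Ical n (Acal k))"

definition gz :: "nat \<Rightarrow> int \<Rightarrow> nat" where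
  "gz k m = (if m < 0 then 0 else g k (nat m))"

definition gt :: "nat \<Rightarrow> nat \<Rightarrow> nat \<Rightarrow> nat" where
  "gt k n t = card {p \<in> Ical n (Acal k). p ! 0 = t}"

definition f :: "nat \<Rightarrow> nat \<Rightarrow> nat" where
  "f j m = card (Ical m (Fcal j))"

definition G :: "nat \<Rightarrow> nat \<Rightarrow> real \<Rightarrow> real" where
  "G k n v = (\<Sum>t=1..n. real (gt k n t) * v ^ (t - 1))"

end

theory Submission
  imports Defs
begin

lemma contains_std:
  fixes p :: "nat list" and ix :: "nat \<Rightarrow> nat" and L :: nat
  assumes dp: "distinct p" and mono: "\<forall>a b. a<b \<and> b<L \<longrightarrow> ix a < ix b"
    and rng: "\<forall>a<L. ix a < length p"
  shows "map (\<lambda>a. card {b. b<L \<and> p!ix b \<le> p!ix a}) [0..<L] \<in> perms L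
     \<and> contains p (map (\<lambda>a. card {b. b<L \<and> p!ix b \<le> p!ix a}) [0..<L])"
proof -
  define r where "r a = card {b. b<L \<and> p!ix b \<le> p!ix a}" for a
  define s where "s = map r [0..<L]"
  have neq: "p!ix a \<noteq> p!ix b" if "a<L" "b<L" "a\<noteq>b" for a b
  proof -
    have "ix a \<noteq> ix b" using mono that by (metis linorder_neqE_nat less_irrefl)
    thus ?thesis using dp rng that by (simp add: nth_eq_iff_index_eq)
  qed
  have rlt: "r a < r b" if "a<L" "b<L" "p!ix a < p!ix b" for a b
  proof -
    have "{c. c<L \<and> p!ix c \<le> p!ix a} \<subseteq> {c. c<L \<and> p!ix c \<le> p!ix b}"
      using that by auto
    moreover have "b \<in> {c. c<L \<and> p!ix c \<le> p!ix b}" "b \<notin> {c. c<L \<and> p!ix c \<le> p!ix a}"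
      using that by auto
    ultimately have "{c. c<L \<and> p!ix c \<le> p!ix a} \<subset> {c. c<L \<and> p!ix c \<le> p!ix b}"
      by blast
    thus ?thesis unfolding r_def by (intro psubset_card_mono) auto
  qed
  have iso: "r a < r b \<longleftrightarrow> p!ix a < p!ix b" if "a<L" "b<L" for a b
    using rlt[OF that] rlt[OF that(2,1)] neq[OF that] that
    by (metis less_asym' linorder_neqE_nat)
  have r1: "1 \<le> r a" if "a<L" for a
  proof -
    have "{c. c<L \<and> p!ix c \<le> p!ix a} \<noteq> {}" using that by auto
    moreover have "finite {c. c<L \<and> p!ix c \<le> p!ix a}" by simp
    ultimately show ?thesis unfolding r_def by (simp add: Suc_le_eq card_gt_0_iff)
  qed
  have r2: "r a \<le> L" for a
  proof -
    have "{c. c<L \<and> p!ix c \<le> p!ix a} \<subseteq> {..<L}" by auto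
    hence "r a \<le> card {..<L}" unfolding r_def by (intro card_mono) auto
    thus ?thesis by simp
  qed
  have ds: "distinct s" unfolding s_def distinct_conv_nth
    using iso neq by (auto, metis less_irrefl linorder_neqE_nat)
  have sub: "set s \<subseteq> {1..L}" unfolding s_def using r1 r2 by auto
  have cs: "card (set s) = L" using distinct_card[OF ds] unfolding s_def by simp
  have "set s = {1..L}" using card_subset_eq[OF _ sub] cs by simp
  hence "s \<in> perms L" using ds by (simp add: perms_def)
  moreover have "contains p s" unfolding contains_def
    by (rule exI[of _ ix]) (auto simp: s_def mono rng iso)
  ultimately show ?thesis unfolding s_def r_def by simp
qed


definition cnt :: "nat list \<Rightarrow> nat \<Rightarrow> nat" where
  "cnt p j = card {l. j < l \<and> l < length p \<and> p!j < p!l}"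
definition bad :: "nat \<Rightarrow> nat list \<Rightarrow> nat \<Rightarrow> bool" where
  "bad k p j \<longleftrightarrow> k - 2 \<le> cnt p j"
definition avA :: "nat \<Rightarrow> nat list \<Rightarrow> bool" where
  "avA k p \<longleftrightarrow> (\<forall>i j. i < j \<and> j < length p \<and> p!i < p!j \<longrightarrow> \<not> bad k p j)"
definition avF :: "nat \<Rightarrow> nat list \<Rightarrow> bool" where
  "avF k p \<longleftrightarrow> (\<forall>j<length p. \<not> bad k p j)"

lemma perms_length: "s \<in> perms k \<Longrightarrow> length s = k"
  unfolding perms_def using distinct_card[of s] by auto

lemma perm_nth_big:
  assumes "s \<in> perms k" "a < k" "b < k" "a \<noteq> b" "s!b = c"
  shows "s!a \<noteq> c"
  using assms perms_length[OF assms(1)] by (auto simp: perms_def nth_eq_iff_index_eq)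

lemma perm_nth_range:
  assumes "s \<in> perms k" "a < k"
  shows "1 \<le> s!a \<and> s!a \<le> k"
proof -
  have "s!a \<in> set s" using assms perms_length[OF assms(1)] by (intro nth_mem) auto
  thus ?thesis using assms by (auto simp: perms_def)
qed

lemma cnt_ge_inj:
  assumes "inj_on ix A" "finite A" "\<forall>a\<in>A. j < ix a \<and> ix a < length p \<and> p!j < p!ix a"
  shows "card A \<le> cnt p j"
  unfolding cnt_def
  by (rule card_inj_on_le[OF assms(1)]) (use assms in auto)

lemma avA_imp_avoids:
  assumes "3 \<le> k" "avA k p"
  shows "avoids p (Acal k)"
  unfolding avoids_def
proof (intro ballI notI)
  fix s assume sA: "s \<in> Acal k" and c: "contains p s"
  have sp: "s \<in> perms k" and s0: "s!0 = 1" and s1: "s!1 = 2" using sA by (auto simp: Acal_def)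
  have ls: "length s = k" using perms_length[OF sp] .
  obtain idx where m: "\<forall>a b. a < b \<and> b < k \<longrightarrow> idx a < idx b"
    and r: "\<forall>a<k. idx a < length p"
    and o: "\<forall>a<k. \<forall>b<k. (p!idx a < p!idx b \<longleftrightarrow> s!a < s!b)"
    using c ls unfolding contains_def by auto
  have big: "2 < s!a" if "2 \<le> a" "a < k" for a
  proof -
    have "s!a \<noteq> 1" using perm_nth_big[OF sp, of a 0 1] that s0 by auto
    moreover have "s!a \<noteq> 2" using perm_nth_big[OF sp, of a 1 2] that s1 by auto
    moreover have "1 \<le> s!a" using perm_nth_range[OF sp] that by auto
    ultimately show ?thesis by linarith
  qed
  have "card {2..<k} \<le> cnt p (idx 1)"
  proof (rule cnt_ge_inj)
    show "inj_on idx {2..<k}" unfolding inj_on_def using m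
      by (metis atLeastLessThan_iff linorder_neqE_nat less_irrefl)
    show "\<forall>a\<in>{2..<k}. idx 1 < idx a \<and> idx a < length p \<and> p ! idx 1 < p ! idx a"
      using m r o big s1 assms(1) by auto
  qed simp
  hence "bad k p (idx 1)" by (simp add: bad_def)
  moreover have "idx 0 < idx 1" "idx 1 < length p" "p!idx 0 < p!idx 1"
    using m r o s0 s1 assms(1) by auto
  ultimately show False using assms(2) unfolding avA_def by blast
qed

lemma avF_imp_avoids:
  assumes "3 \<le> k" "avF k p"
  shows "avoids p (Fcal (k-1))"
  unfolding avoids_def
proof (intro ballI notI)
  fix s assume sA: "s \<in> Fcal (k-1)" and c: "contains p s"
  have sp: "s \<in> perms (k-1)" and s0: "s!0 = 1" using sA by (auto simp: Fcal_def)
  have ls: "length s = k-1" using perms_length[OF sp] .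
  obtain idx where m: "\<forall>a b. a < b \<and> b < k-1 \<longrightarrow> idx a < idx b"
    and r: "\<forall>a<k-1. idx a < length p"
    and o: "\<forall>a<k-1. \<forall>b<k-1. (p!idx a < p!idx b \<longleftrightarrow> s!a < s!b)"
    using c ls unfolding contains_def by auto
  have big: "1 < s!a" if "1 \<le> a" "a < k-1" for a
  proof -
    have "s!a \<noteq> 1" using perm_nth_big[OF sp, of a 0 1] that s0 by auto
    moreover have "1 \<le> s!a" using perm_nth_range[OF sp] that by auto
    ultimately show ?thesis by linarith
  qed
  have "card {1..<k-1} \<le> cnt p (idx 0)"
  proof (rule cnt_ge_inj)
    show "inj_on idx {1..<k-1}" unfolding inj_on_def using m
      by (metis atLeastLessThan_iff linorder_neqE_nat less_irrefl)
    show "\<forall>a\<in>{1..<k-1}. idx 0 < idx a \<and> idx a < length p \<and> p ! idx 0 < p ! idx a"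
      using m r o big s0 assms(1) by auto
  qed simp
  hence "bad k p (idx 0)" by (simp add: bad_def)
  moreover have "idx 0 < length p" using r assms(1) by auto
  ultimately show False using assms(2) unfolding avF_def by blast
qed


lemma avoids_imp_avA:
  assumes k3: "3 \<le> k" and dp: "distinct p" and av: "avoids p (Acal k)"
  shows "avA k p"
  unfolding avA_def
proof (intro allI impI notI)
  fix i j assume h: "i < j \<and> j < length p \<and> p!i < p!j" and b: "bad k p j"
  let ?S = "{l. j < l \<and> l < length p \<and> p!j < p!l}"
  have "k-2 \<le> card ?S" using b by (simp add: bad_def cnt_def)
  then obtain T where T: "T \<subseteq> ?S" "card T = k-2" "finite T" by (rule obtain_subset_with_card_n)
  obtain ls where ls: "sorted_wrt (<) ls" "set ls = T" "length ls = card T"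
    using finite_set_strict_sorted[OF T(3)] by blast
  define ix where "ix a = (if a = 0 then i else if a = 1 then j else ls!(a-2))" for a
  have lsT: "ls!c \<in> ?S" if "c < k-2" for c
    using T ls that nth_mem[of c ls] by auto
  have mono: "\<forall>a b. a<b \<and> b<k \<longrightarrow> ix a < ix b"
  proof (intro allI impI)
    fix a b assume ab: "a<b \<and> b<k"
    show "ix a < ix b"
    proof (cases "b \<ge> 2")
      case True
      have jb: "j < ix b" using lsT[of "b-2"] ab True by (auto simp: ix_def)
      show ?thesis
      proof (cases "a \<ge> 2")
        case True
        have "ls!(a-2) < ls!(b-2)" using sorted_wrt_nth_less[OF ls(1), of "a-2" "b-2"] ab True ls T
          by auto
        thus ?thesis using True \<open>b\<ge>2\<close> by (simp add: ix_def)
      next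
        case False
        thus ?thesis using jb h ab by (auto simp: ix_def)
      qed
    next
      case False
      hence "a = 0" "b = 1" using ab by auto
      thus ?thesis using h by (simp add: ix_def)
    qed
  qed
  have rng: "\<forall>a<k. ix a < length p"
    using lsT h by (auto simp: ix_def)
  have gt: "p!i < p!ix b" if "b < k" "b \<noteq> 0" for b
  proof (cases "b = 1")
    case True thus ?thesis using h by (simp add: ix_def)
  next
    case False
    hence "b - 2 < k - 2" using that by auto
    thus ?thesis using lsT[of "b-2"] that h False by (auto simp: ix_def)
  qed
  have gt1: "p!j < p!ix b" if "b < k" "b \<ge> 2" for b
    using lsT[of "b-2"] that h by (auto simp: ix_def)
  define s where "s = map (\<lambda>a. card {b. b<k \<and> p!ix b \<le> p!ix a}) [0..<k]"
  have sc: "s \<in> perms k \<and> contains p s" unfolding s_def by (rule contains_std[OF dp mono rng])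
  have e0: "{b. b<k \<and> p!ix b \<le> p!ix 0} = {0}"
  proof -
    have "b = 0" if "b<k" "p!ix b \<le> p!ix 0" for b
      using gt[of b] that by (cases "b=0") (auto simp: ix_def)
    thus ?thesis using k3 by auto
  qed
  have e1: "{b. b<k \<and> p!ix b \<le> p!ix 1} = {0,1}"
  proof -
    have "b \<in> {0,1}" if "b<k" "p!ix b \<le> p!ix 1" for b
      using gt1[of b] that by (cases "b \<ge> 2") (auto simp: ix_def)
    moreover have "0 \<in> {b. b<k \<and> p!ix b \<le> p!ix 1}" "1 \<in> {b. b<k \<and> p!ix b \<le> p!ix 1}"
      using k3 h by (auto simp: ix_def)
    ultimately show ?thesis by blast
  qed
  have "s!0 = 1" "s!1 = 2" using k3 e0 e1 by (auto simp: s_def)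
  hence "s \<in> Acal k" using sc by (simp add: Acal_def)
  thus False using av sc unfolding avoids_def by blast
qed

lemma avoids_imp_avF:
  assumes k3: "3 \<le> k" and dp: "distinct p" and av: "avoids p (Fcal (k-1))"
  shows "avF k p"
  unfolding avF_def
proof (intro allI impI notI)
  fix j assume h: "j < length p" and b: "bad k p j"
  let ?S = "{l. j < l \<and> l < length p \<and> p!j < p!l}"
  have "k-2 \<le> card ?S" using b by (simp add: bad_def cnt_def)
  then obtain T where T: "T \<subseteq> ?S" "card T = k-2" "finite T" by (rule obtain_subset_with_card_n)
  obtain ls where ls: "sorted_wrt (<) ls" "set ls = T" "length ls = card T"
    using finite_set_strict_sorted[OF T(3)] by blast
  define ix where "ix a = (if a = 0 then j else ls!(a-1))" for a
  have lsT: "ls!c \<in> ?S" if "c < k-2" for c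
    using T ls that nth_mem[of c ls] by auto
  have mono: "\<forall>a b. a<b \<and> b<k-1 \<longrightarrow> ix a < ix b"
  proof (intro allI impI)
    fix a b assume ab: "a<b \<and> b<k-1"
    have jb: "j < ix b" using lsT[of "b-1"] ab by (auto simp: ix_def)
    show "ix a < ix b"
    proof (cases "a \<ge> 1")
      case True
      have "ls!(a-1) < ls!(b-1)" using sorted_wrt_nth_less[OF ls(1), of "a-1" "b-1"] ab True ls T
        by auto
      thus ?thesis using True ab by (simp add: ix_def)
    next
      case False
      thus ?thesis using jb by (auto simp: ix_def)
    qed
  qed
  have rng: "\<forall>a<k-1. ix a < length p"
    using lsT h by (auto simp: ix_def)
  have gt: "p!j < p!ix b" if "b < k-1" "b \<noteq> 0" for b
    using lsT[of "b-1"] that h by (auto simp: ix_def)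
  define s where "s = map (\<lambda>a. card {b. b<k-1 \<and> p!ix b \<le> p!ix a}) [0..<k-1]"
  have sc: "s \<in> perms (k-1) \<and> contains p s" unfolding s_def by (rule contains_std[OF dp mono rng])
  have e0: "{b. b<k-1 \<and> p!ix b \<le> p!ix 0} = {0}"
  proof -
    have "b = 0" if "b<k-1" "p!ix b \<le> p!ix 0" for b
      using gt[of b] that by (cases "b=0") (auto simp: ix_def)
    thus ?thesis using k3 by auto
  qed
  have "s!0 = 1" using k3 e0 by (auto simp: s_def)
  hence "s \<in> Fcal (k-1)" using sc by (simp add: Fcal_def)
  thus False using av sc unfolding avoids_def by blast
qed

lemma avoids_A_iff: "3 \<le> k \<Longrightarrow> distinct p \<Longrightarrow> avoids p (Acal k) \<longleftrightarrow> avA k p"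
  using avoids_imp_avA avA_imp_avoids by blast

lemma avoids_F_iff: "3 \<le> k \<Longrightarrow> distinct p \<Longrightarrow> avoids p (Fcal (k-1)) \<longleftrightarrow> avF k p"
  using avoids_imp_avF avF_imp_avoids by blast


definition invp :: "nat \<Rightarrow> nat list \<Rightarrow> bool" where
  "invp n p \<longleftrightarrow> length p = n \<and> (\<forall>i<n. 1 \<le> p!i \<and> p!i \<le> n) \<and> (\<forall>i<n. p!(p!i - 1) = i+1)"

lemma invp_inj: "invp n p \<Longrightarrow> i < n \<Longrightarrow> j < n \<Longrightarrow> p!i = p!j \<Longrightarrow> i = j"
  unfolding invp_def by (metis add_right_cancel)

lemma invp_iff: "p \<in> perms n \<and> involution p \<longleftrightarrow> invp n p"
proof
  assume h: "p \<in> perms n \<and> involution p"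
  have l: "length p = n" using perms_length h by blast
  show "invp n p" unfolding invp_def
    using l perm_nth_range[of p n] h by (auto simp: involution_def)
next
  assume h: "invp n p"
  have l: "length p = n" using h by (simp add: invp_def)
  have d: "distinct p" unfolding distinct_conv_nth using invp_inj[OF h] l by auto
  have sub: "set p \<subseteq> {1..n}" using h l by (auto simp: invp_def in_set_conv_nth)
  have "card (set p) = n" using distinct_card[OF d] l by simp
  hence "set p = {1..n}" using card_subset_eq[OF _ sub] by simp
  thus "p \<in> perms n \<and> involution p" using d h l by (auto simp: perms_def involution_def invp_def)
qed

lemma invp_distinct: "invp n p \<Longrightarrow> distinct p"
  using invp_iff[of p n] by (simp add: perms_def)

lemma Ical_A: assumes "3 \<le> k" shows "Ical n (Acal k) = {p. invp n p \<and> avA k p}"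
proof (rule set_eqI)
  fix p
  show "p \<in> Ical n (Acal k) \<longleftrightarrow> p \<in> {p. invp n p \<and> avA k p}"
  proof (cases "invp n p")
    case True
    have "avoids p (Acal k) \<longleftrightarrow> avA k p" using avoids_A_iff[OF assms invp_distinct[OF True]] .
    thus ?thesis using True invp_iff[of p n] unfolding Ical_def by simp
  next
    case False
    thus ?thesis using invp_iff[of p n] unfolding Ical_def by blast
  qed
qed

lemma Ical_F: assumes "3 \<le> k" shows "Ical n (Fcal (k-1)) = {p. invp n p \<and> avF k p}"
proof (rule set_eqI)
  fix p
  show "p \<in> Ical n (Fcal (k-1)) \<longleftrightarrow> p \<in> {p. invp n p \<and> avF k p}"
  proof (cases "invp n p")
    case True
    have "avoids p (Fcal (k-1)) \<longleftrightarrow> avF k p" using avoids_F_iff[OF assms invp_distinct[OF True]] .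
    thus ?thesis using True invp_iff[of p n] unfolding Ical_def by simp
  next
    case False
    thus ?thesis using invp_iff[of p n] unfolding Ical_def by blast
  qed
qed

lemma Inv_eq: "Inv n = card {p. invp n p}"
proof -
  have "{p \<in> perms n. involution p} = {p. invp n p}" using invp_iff by auto
  thus ?thesis unfolding Inv_def by simp
qed

lemma card_transfer:
  assumes b: "bij_betw h A B" and e: "\<forall>x\<in>A. P x \<longleftrightarrow> Q (h x)"
  shows "card {x\<in>A. P x} = card {y\<in>B. Q y}"
proof -
  have im: "h ` A = B" using b by (simp add: bij_betw_def)
  have "h ` {x\<in>A. P x} = {y\<in>B. Q y}"
  proof
    show "h ` {x\<in>A. P x} \<subseteq> {y\<in>B. Q y}" using im e by blast
    show "{y\<in>B. Q y} \<subseteq> h ` {x\<in>A. P x}"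
    proof
      fix y assume "y \<in> {y\<in>B. Q y}"
      then obtain x where "x \<in> A" "y = h x" "Q y" using im by blast
      thus "y \<in> h ` {x\<in>A. P x}" using e by blast
    qed
  qed
  moreover have "{x\<in>A. P x} \<subseteq> A" by blast
  ultimately have "bij_betw h {x\<in>A. P x} {y\<in>B. Q y}"
    using bij_betw_subset[OF b] by blast
  thus ?thesis by (rule bij_betw_same_card)
qed

definition posm :: "nat \<Rightarrow> nat \<Rightarrow> nat" where "posm t j = (if j + 3 \<le> t then j+1 else j+2)"
definition unpos :: "nat \<Rightarrow> nat \<Rightarrow> nat" where "unpos t l = (if l < t then l - 1 else l - 2)"
definition inc :: "nat \<Rightarrow> nat \<Rightarrow> nat" where "inc t x = (if x + 2 \<le> t then x+1 else x+2)"
definition dec :: "nat \<Rightarrow> nat \<Rightarrow> nat" where "dec t y = (if y \<le> t then y - 1 else y - 2)"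

definition Rm :: "nat \<Rightarrow> nat list \<Rightarrow> nat list" where
  "Rm t p = map (\<lambda>j. dec t (p ! posm t j)) [0..<length p - 2]"
definition Ins :: "nat \<Rightarrow> nat list \<Rightarrow> nat list" where
  "Ins t s = map (\<lambda>i. if i = 0 then t else if i = t - 1 then 1 else inc t (s ! unpos t i)) [0..<length s + 2]"

lemma a1: "2 \<le> t \<Longrightarrow> 2 \<le> y \<Longrightarrow> y \<noteq> t \<Longrightarrow> posm t (dec t y - 1) = y - 1"
  unfolding posm_def dec_def by (simp split: if_splits; linarith)
lemma a2: "dec t (posm t j + 1) = j + 1"
  unfolding posm_def dec_def by (simp split: if_splits; linarith)
lemma a3: "2 \<le> y \<Longrightarrow> y \<noteq> t \<Longrightarrow> inc t (dec t y) = y"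
  unfolding inc_def dec_def by (simp split: if_splits; linarith)
lemma a4: "dec t (inc t x) = x"
  unfolding inc_def dec_def by (simp split: if_splits; linarith)
lemma a5: "unpos t (posm t j) = j"
  unfolding posm_def unpos_def by (simp split: if_splits; linarith)
lemma a6: "2 \<le> t \<Longrightarrow> l \<noteq> 0 \<Longrightarrow> l \<noteq> t - 1 \<Longrightarrow> posm t (unpos t l) = l"
  unfolding posm_def unpos_def by (simp split: if_splits; linarith)
lemma posm_mono: "posm t j < posm t j' \<longleftrightarrow> j < j'"
  unfolding posm_def by (simp split: if_splits; linarith)
lemma inc_mono: "inc t x < inc t x' \<longleftrightarrow> x < x'"
  unfolding inc_def by (simp split: if_splits; linarith)
lemma a8: "2 \<le> t \<Longrightarrow> posm t j \<noteq> 0 \<and> posm t j \<noteq> t - 1"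
  unfolding posm_def by (simp split: if_splits; linarith)
lemma inc_ne: "1 \<le> x \<Longrightarrow> inc t x \<noteq> 1 \<and> inc t x \<noteq> t \<and> 2 \<le> inc t x"
  unfolding inc_def by (simp split: if_splits; linarith)
lemma b1: "1 \<le> x \<Longrightarrow> unpos t (inc t x - 1) = x - 1"
  unfolding inc_def unpos_def by (simp split: if_splits; linarith)
lemma b2: "2 \<le> t \<Longrightarrow> i \<noteq> 0 \<Longrightarrow> i \<noteq> t - 1 \<Longrightarrow> inc t (unpos t i + 1) = i + 1"
  unfolding inc_def unpos_def by (simp split: if_splits; linarith)


lemma Ins_nth: "i < length s + 2 \<Longrightarrow>
  Ins t s ! i = (if i = 0 then t else if i = t - 1 then 1 else inc t (s ! unpos t i))"
  unfolding Ins_def by (simp del: upt_Suc)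

lemma Ins_len: "length (Ins t s) = length s + 2"
  unfolding Ins_def by (simp del: upt_Suc)

locale rmctx =
  fixes n t :: nat and p :: "nat list"
  assumes ip: "invp n p" and p0: "p!0 = t" and t2: "2 \<le> t" and tn: "t \<le> n"
begin

lemma lenp: "length p = n" using ip by (simp add: invp_def)

lemma plast: "p!(t-1) = 1"
  using ip p0 t2 tn unfolding invp_def by (metis add_0 less_le_trans not_numeral_le_zero zero_less_iff_neq_zero)

lemma pother: assumes "l < n" "l \<noteq> 0" "l \<noteq> t - 1" shows "p!l \<noteq> 1 \<and> p!l \<noteq> t \<and> 2 \<le> p!l"
proof -
  have "p!l \<noteq> t" using invp_inj[OF ip, of l 0] assms p0 t2 tn by auto
  moreover have "p!l \<noteq> 1"
  proof
    assume "p!l = 1"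
    moreover have "t - 1 < n" using t2 tn by simp
    ultimately have "l = t - 1" using invp_inj[OF ip, of l "t-1"] assms plast by simp
    thus False using assms by simp
  qed
  moreover have "1 \<le> p!l" using ip assms by (simp add: invp_def)
  ultimately show ?thesis by linarith
qed

lemma posm_lt: "j < n - 2 \<Longrightarrow> posm t j < n"
  unfolding posm_def by auto

lemma Rm_len: "length (Rm t p) = n - 2" by (simp add: Rm_def lenp)

lemma Rm_nth: "j < n - 2 \<Longrightarrow> Rm t p ! j = dec t (p ! posm t j)"
  by (simp add: Rm_def lenp)

lemma Rm_vals: assumes "j < n - 2" shows "p ! posm t j = inc t (Rm t p ! j)"
proof -
  have "posm t j \<noteq> 0 \<and> posm t j \<noteq> t - 1" using a8[OF t2] .
  hence "p!posm t j \<noteq> 1 \<and> p!posm t j \<noteq> t \<and> 2 \<le> p!posm t j" using pother posm_lt[OF assms] by blast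
  thus ?thesis using Rm_nth[OF assms] a3 by simp
qed

lemma Rm_invp: "invp (n-2) (Rm t p)"
  unfolding invp_def
proof (intro conjI allI impI)
  show "length (Rm t p) = n - 2" by (rule Rm_len)
  fix j assume j: "j < n - 2"
  define y where "y = p ! posm t j"
  have y: "y \<noteq> 1 \<and> y \<noteq> t \<and> 2 \<le> y" unfolding y_def using pother posm_lt[OF j] a8[OF t2] by blast
  have yn: "y \<le> n" unfolding y_def using ip posm_lt[OF j] by (simp add: invp_def)
  have r: "Rm t p ! j = dec t y" using Rm_nth[OF j] y_def by simp
  show "1 \<le> Rm t p ! j" using r y t2 unfolding dec_def by auto
  show "Rm t p ! j \<le> n - 2" using r y yn tn unfolding dec_def by (cases "y \<le> t") auto
  have lt: "dec t y - 1 < n - 2" using y yn t2 tn unfolding dec_def by (cases "y \<le> t") auto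
  have "Rm t p ! (Rm t p ! j - 1) = dec t (p ! posm t (dec t y - 1))" using Rm_nth[OF lt] r by simp
  also have "\<dots> = dec t (p ! (y - 1))" using a1[OF t2, of y] y by simp
  also have "\<dots> = dec t (posm t j + 1)" using ip posm_lt[OF j] y_def by (simp add: invp_def)
  also have "\<dots> = j + 1" by (rule a2)
  finally show "Rm t p ! (Rm t p ! j - 1) = j + 1" .
qed

lemma IR: "Ins t (Rm t p) = p"
proof (rule nth_equalityI)
  have n2: "2 \<le> n" using t2 tn by simp
  show "length (Ins t (Rm t p)) = length p" using Rm_len lenp n2 by (simp add: Ins_len)
  fix i assume "i < length (Ins t (Rm t p))"
  hence i: "i < n" using Rm_len lenp n2 by (simp add: Ins_len)
  show "Ins t (Rm t p) ! i = p ! i"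
  proof (cases "i = 0 \<or> i = t - 1")
    case True
    thus ?thesis using i p0 plast Rm_len n2 by (auto simp: Ins_nth)
  next
    case False
    have u: "unpos t i < n - 2" using i False t2 tn unfolding unpos_def by auto
    have "Ins t (Rm t p) ! i = inc t (Rm t p ! unpos t i)" using i False Rm_len n2 by (simp add: Ins_nth)
    also have "\<dots> = p ! posm t (unpos t i)" using Rm_vals[OF u] by simp
    also have "\<dots> = p ! i" using a6[OF t2] False by simp
    finally show ?thesis .
  qed
qed

end

lemma Ins_props:
  assumes hs: "invp (n-2) s" and t2: "2 \<le> t" and tn: "t \<le> n"
  shows "invp n (Ins t s) \<and> Ins t s ! 0 = t"
proof -
  have n2: "2 \<le> n" using t2 tn by simp
  have ls: "length s = n - 2" using hs by (simp add: invp_def)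
  have len: "length (Ins t s) = n" using ls n2 by (simp add: Ins_len)
  have nth: "Ins t s ! i = (if i = 0 then t else if i = t - 1 then 1 else inc t (s ! unpos t i))"
    if "i < n" for i using that ls n2 by (simp add: Ins_nth)
  have u: "unpos t i < n - 2" if "i < n" "i \<noteq> 0" "i \<noteq> t - 1" for i
    using that t2 tn unfolding unpos_def by auto
  have srange: "1 \<le> s!j \<and> s!j \<le> n - 2" if "j < n - 2" for j using hs that by (simp add: invp_def)
  have sinv: "s!(s!j - 1) = j + 1" if "j < n - 2" for j using hs that by (simp add: invp_def)
  have "invp n (Ins t s)"
    unfolding invp_def
  proof (intro conjI allI impI)
    show "length (Ins t s) = n" by (rule len)
    fix i assume i: "i < n"
    have rg: "1 \<le> Ins t s ! i \<and> Ins t s ! i \<le> n"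
    proof (cases "i = 0 \<or> i = t - 1")
      case True thus ?thesis using nth[OF i] t2 tn by auto
    next
      case False
      have "unpos t i < n - 2" using u[OF i] False by auto
      hence "1 \<le> s ! unpos t i \<and> s ! unpos t i \<le> n - 2" using srange by blast
      thus ?thesis using nth[OF i] False unfolding inc_def by auto
    qed
    show "1 \<le> Ins t s ! i" using rg by simp
    show "Ins t s ! i \<le> n" using rg by simp
    show "Ins t s ! (Ins t s ! i - 1) = i + 1"
    proof (cases "i = 0")
      case True
      thus ?thesis using nth[OF i] nth[of "t-1"] t2 tn by auto
    next
      case i0: False
      show ?thesis
      proof (cases "i = t - 1")
        case True
        thus ?thesis using nth[OF i] nth[of 0] t2 tn i0 by auto
      next
        case False
        define x where "x = s ! unpos t i"
        have x: "1 \<le> x \<and> x \<le> n - 2" using srange u[OF i i0 False] x_def by blast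
        have e: "Ins t s ! i = inc t x" using nth[OF i] i0 False x_def by simp
        have ne: "inc t x \<noteq> 1 \<and> inc t x \<noteq> t \<and> 2 \<le> inc t x" using inc_ne x by blast
        have lt: "inc t x - 1 < n" using x unfolding inc_def by auto
        have "Ins t s ! (inc t x - 1) = inc t (s ! unpos t (inc t x - 1))"
          using nth[OF lt] ne by auto
        also have "\<dots> = inc t (s ! (x - 1))" using b1 x by simp
        also have "\<dots> = inc t (unpos t i + 1)" using sinv[OF u[OF i i0 False]] x_def by simp
        also have "\<dots> = i + 1" using b2[OF t2 i0 False] .
        finally show ?thesis using e by simp
      qed
    qed
  qed
  moreover have "Ins t s ! 0 = t" using nth[of 0] n2 by simp
  ultimately show ?thesis by blast
qed

lemma RI:
  assumes t2: "2 \<le> t" shows "Rm t (Ins t s) = s"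
proof (rule nth_equalityI)
  show "length (Rm t (Ins t s)) = length s" by (simp add: Rm_def Ins_len)
  fix j assume "j < length (Rm t (Ins t s))"
  hence j: "j < length s" by (simp add: Rm_def Ins_len)
  have pl: "posm t j < length s + 2" unfolding posm_def using j by simp
  have ne: "posm t j \<noteq> 0 \<and> posm t j \<noteq> t - 1" using a8[OF t2] .
  have "Rm t (Ins t s) ! j = dec t (Ins t s ! posm t j)" using j by (simp add: Rm_def Ins_len)
  also have "\<dots> = dec t (inc t (s ! unpos t (posm t j)))" using pl ne by (simp add: Ins_nth)
  also have "\<dots> = s ! j" by (simp add: a4 a5)
  finally show "Rm t (Ins t s) ! j = s ! j" .
qed

lemma Rm_bij:
  assumes t2: "2 \<le> t" and tn: "t \<le> n"
  shows "bij_betw (Rm t) {p. invp n p \<and> p!0 = t} {s. invp (n-2) s}"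
proof (rule bij_betw_byWitness[where f' = "Ins t"])
  show "\<forall>a\<in>{p. invp n p \<and> p ! 0 = t}. Ins t (Rm t a) = a"
    using rmctx.IR rmctx.intro t2 tn by blast
  show "\<forall>a'\<in>{s. invp (n - 2) s}. Rm t (Ins t a') = a'" using RI[OF t2] by blast
  show "Rm t ` {p. invp n p \<and> p ! 0 = t} \<subseteq> {s. invp (n - 2) s}"
    using rmctx.Rm_invp rmctx.intro t2 tn by blast
  show "Ins t ` {s. invp (n - 2) s} \<subseteq> {p. invp n p \<and> p ! 0 = t}"
    using Ins_props t2 tn by blast
qed


definition ok :: "nat \<Rightarrow> nat \<Rightarrow> nat list \<Rightarrow> bool" where
  "ok k t s \<longleftrightarrow> (\<forall>j<length s. bad k s j \<longrightarrow> s!j + 2 \<le> t \<and> j + 3 \<le> t)"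

context rmctx begin

lemma unpos_lt: "l < n \<Longrightarrow> l \<noteq> 0 \<Longrightarrow> l \<noteq> t - 1 \<Longrightarrow> unpos t l < n - 2"
  using t2 tn unfolding unpos_def by auto

lemma cnt_Rm: assumes j: "j < n - 2" shows "cnt (Rm t p) j = cnt p (posm t j)"
proof -
  let ?s = "Rm t p"
  let ?S1 = "{l. j < l \<and> l < length ?s \<and> ?s!j < ?s!l}"
  let ?S2 = "{l. posm t j < l \<and> l < length p \<and> p!posm t j < p!l}"
  have vj: "p!posm t j = inc t (?s!j)" using Rm_vals[OF j] .
  have "posm t ` ?S1 = ?S2"
  proof
    show "posm t ` ?S1 \<subseteq> ?S2"
    proof
      fix x assume "x \<in> posm t ` ?S1"
      then obtain l where l: "l \<in> ?S1" and xl: "x = posm t l" by blast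
      have l1: "j < l" "l < n - 2" "?s!j < ?s!l" using l Rm_len by auto
      have vl: "p!posm t l = inc t (?s!l)" using Rm_vals[OF l1(2)] .
      have "posm t j < posm t l" using posm_mono l1(1) by blast
      moreover have "posm t l < length p" using posm_lt[OF l1(2)] lenp by simp
      moreover have "p!posm t j < p!posm t l" using vj vl inc_mono l1(3) by simp
      ultimately show "x \<in> ?S2" using xl by blast
    qed
    show "?S2 \<subseteq> posm t ` ?S1"
    proof
      fix l assume l: "l \<in> ?S2"
      have l1: "posm t j < l" "l < n" "p!posm t j < p!l" using l lenp by auto
      have l0: "l \<noteq> 0" using l1(1) by simp
      have pj: "2 \<le> p!posm t j" using pother[of "posm t j"] posm_lt[OF j] a8[OF t2] by blast
      have lt: "l \<noteq> t - 1"
      proof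
        assume "l = t - 1"
        hence "p!l = 1" using plast by simp
        thus False using l1(3) pj by simp
      qed
      have u: "unpos t l < n - 2" using unpos_lt[OF l1(2) l0 lt] .
      have pl: "posm t (unpos t l) = l" using a6[OF t2 l0 lt] .
      have "posm t j < posm t (unpos t l)" using l1(1) pl by simp
      hence c1: "j < unpos t l" using posm_mono by blast
      have "inc t (?s!j) < inc t (?s!unpos t l)"
        using l1(3) vj Rm_vals[OF u] pl by simp
      hence c2: "?s!j < ?s!unpos t l" using inc_mono by blast
      have "unpos t l \<in> ?S1" using c1 c2 u Rm_len by simp
      thus "l \<in> posm t ` ?S1" using pl by (metis image_eqI)
    qed
  qed
  moreover have inj: "inj_on (posm t) ?S1"
  proof (rule inj_onI)
    fix x y assume "posm t x = posm t y"
    thus "x = y" unfolding posm_def by (simp split: if_splits; linarith)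
  qed
  ultimately have "card ?S2 = card ?S1" using card_image[OF inj] by simp
  thus ?thesis unfolding cnt_def by simp
qed

lemma bad_Rm: "j < n - 2 \<Longrightarrow> bad k (Rm t p) j \<longleftrightarrow> bad k p (posm t j)"
  unfolding bad_def using cnt_Rm by simp

lemma avA_Rm: "avA k p \<longleftrightarrow> avA k (Rm t p) \<and> ok k t (Rm t p)"
proof
  let ?s = "Rm t p"
  assume av: "avA k p"
  show "avA k ?s \<and> ok k t ?s"
  proof
    show "avA k ?s" unfolding avA_def
    proof (intro allI impI notI)
      fix i j assume h: "i < j \<and> j < length ?s \<and> ?s!i < ?s!j" and b: "bad k ?s j"
      have jn: "j < n - 2" "i < n - 2" using h Rm_len by auto
      have "posm t i < posm t j" using h posm_mono by blast
      moreover have "p!posm t i < p!posm t j" using Rm_vals jn h inc_mono by auto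
      moreover have "posm t j < length p" using posm_lt jn lenp by auto
      moreover have "bad k p (posm t j)" using bad_Rm jn b by blast
      ultimately show False using av unfolding avA_def by blast
    qed
    show "ok k t ?s" unfolding ok_def
    proof (intro allI impI)
      fix j assume jl: "j < length ?s" and b: "bad k ?s j"
      have jn: "j < n - 2" using jl Rm_len by simp
      have bp: "bad k p (posm t j)" using bad_Rm jn b by blast
      have pl: "posm t j < length p" using posm_lt jn lenp by auto
      have v: "p!posm t j = inc t (?s!j)" using Rm_vals jn by blast
      have s1: "1 \<le> ?s!j" using Rm_invp jn by (simp add: invp_def)
      have c1: "?s!j + 2 \<le> t"
      proof (rule ccontr)
        assume "\<not> ?s!j + 2 \<le> t"
        hence "p!0 < p!posm t j" using v p0 unfolding inc_def by auto
        moreover have "0 < posm t j" using a8[OF t2] by auto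
        ultimately show False using av bp pl unfolding avA_def by blast
      qed
      have c2: "j + 3 \<le> t"
      proof (rule ccontr)
        assume "\<not> j + 3 \<le> t"
        hence "t - 1 < posm t j" unfolding posm_def by auto
        moreover have "p!(t-1) < p!posm t j"
        proof -
          have "2 \<le> inc t (?s!j)" using inc_ne[OF s1, of t] by blast
          thus ?thesis using v plast by simp
        qed
        ultimately show False using av bp pl unfolding avA_def by blast
      qed
      show "?s!j + 2 \<le> t \<and> j + 3 \<le> t" using c1 c2 by blast
    qed
  qed
next
  let ?s = "Rm t p"
  assume "avA k ?s \<and> ok k t ?s"
  hence av: "avA k ?s" and okk: "ok k t ?s" by auto
  show "avA k p" unfolding avA_def
  proof (intro allI impI notI)
    fix i j assume h: "i < j \<and> j < length p \<and> p!i < p!j" and b: "bad k p j"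
    have jn: "j < n" using h lenp by simp
    have j0: "j \<noteq> 0" using h by simp
    have i1: "1 \<le> p!i" using ip h lenp by (simp add: invp_def)
    have jt: "j \<noteq> t - 1" using plast h i1 by auto
    define j' where "j' = unpos t j"
    have j'n: "j' < n - 2" using unpos_lt[OF jn j0 jt] j'_def by simp
    have pj: "posm t j' = j" using a6[OF t2 j0 jt] j'_def by simp
    have bs: "bad k ?s j'" using bad_Rm[OF j'n] pj b by simp
    have v: "p!j = inc t (?s!j')" using Rm_vals[OF j'n] pj by simp
    have okj: "?s!j' + 2 \<le> t \<and> j' + 3 \<le> t" using okk bs j'n Rm_len unfolding ok_def by simp
    show False
    proof (cases "i = 0")
      case True
      hence "t < inc t (?s!j')" using h p0 v by simp
      thus False using okj unfolding inc_def by auto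
    next
      case i0: False
      show False
      proof (cases "i = t - 1")
        case True
        hence "t - 1 < posm t j'" using h pj by simp
        thus False using okj unfolding posm_def by auto
      next
        case False
        define i' where "i' = unpos t i"
        have i'n: "i' < n - 2" using unpos_lt[of i] h lenp i0 False i'_def by simp
        have pi: "posm t i' = i" using a6[OF t2 i0 False] i'_def by simp
        have "posm t i' < posm t j'" using h pi pj by simp
        hence "i' < j'" using posm_mono by blast
        moreover have "inc t (?s!i') < inc t (?s!j')" using h pi v Rm_vals[OF i'n] by simp
        hence "?s!i' < ?s!j'" using inc_mono by blast
        ultimately show False using av bs j'n Rm_len unfolding avA_def by auto
      qed
    qed
  qed
qed

end


lemma cnt_shift:
  assumes lq: "length q = length p - 1" and v: "\<And>l. l < length q \<Longrightarrow> p!(l+1) = Suc (q!l)"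
    and j: "j < length q"
  shows "cnt q j = cnt p (j+1)"
proof -
  have e: "{l. j+1 < l \<and> l < length p \<and> p!(j+1) < p!l} = Suc ` {l. j < l \<and> l < length q \<and> q!j < q!l}"
  proof (rule set_eqI)
    fix x
    show "x \<in> {l. j+1 < l \<and> l < length p \<and> p!(j+1) < p!l} \<longleftrightarrow> x \<in> Suc ` {l. j < l \<and> l < length q \<and> q!j < q!l}"
    proof (cases x)
      case 0 thus ?thesis by auto
    next
      case (Suc y)
      have "x \<in> Suc ` {l. j < l \<and> l < length q \<and> q!j < q!l} \<longleftrightarrow> j < y \<and> y < length q \<and> q!j < q!y"
        using Suc by auto
      moreover have "x \<in> {l. j+1 < l \<and> l < length p \<and> p!(j+1) < p!l} \<longleftrightarrow> j < y \<and> y < length q \<and> q!j < q!y"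
      proof -
        have "y < length q \<longleftrightarrow> Suc y < length p" using lq j by auto
        moreover have "y < length q \<Longrightarrow> p!(j+1) < p!(y+1) \<longleftrightarrow> q!j < q!y" using v[OF j] v[of y] by simp
        ultimately show ?thesis using Suc by auto
      qed
      ultimately show ?thesis by blast
    qed
  qed
  have "card (Suc ` {l. j < l \<and> l < length q \<and> q!j < q!l}) = card {l. j < l \<and> l < length q \<and> q!j < q!l}"
    by (rule card_image) (simp add: inj_on_def)
  thus ?thesis unfolding cnt_def using e by simp
qed


definition Rm1 :: "nat list \<Rightarrow> nat list" where
  "Rm1 p = map (\<lambda>j. p!(j+1) - 1) [0..<length p - 1]"
definition Ins1 :: "nat list \<Rightarrow> nat list" where
  "Ins1 s = 1 # map Suc s"

locale rm1ctx =
  fixes n :: nat and p :: "nat list"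
  assumes ip: "invp n p" and p0: "p!0 = 1" and n1: "1 \<le> n"
begin

lemma lenp: "length p = n" using ip by (simp add: invp_def)

lemma pother: "l < n \<Longrightarrow> l \<noteq> 0 \<Longrightarrow> 2 \<le> p!l \<and> p!l \<le> n"
proof -
  assume l: "l < n" "l \<noteq> 0"
  have "p!l \<noteq> 1" using invp_inj[OF ip, of l 0] l p0 n1 by auto
  moreover have "1 \<le> p!l \<and> p!l \<le> n" using ip l by (simp add: invp_def)
  ultimately show ?thesis by linarith
qed

lemma Rm1_len: "length (Rm1 p) = n - 1" by (simp add: Rm1_def lenp)
lemma Rm1_nth: "j < n - 1 \<Longrightarrow> Rm1 p ! j = p!(j+1) - 1" by (simp add: Rm1_def lenp)
lemma Rm1_vals: assumes j: "j < n - 1" shows "p!(j+1) = Suc (Rm1 p ! j)"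
proof -
  have "j + 1 < n" using j by simp
  hence "2 \<le> p!(j+1)" using pother[of "j+1"] by simp
  thus ?thesis using Rm1_nth[OF j] by simp
qed

lemma Rm1_invp: "invp (n-1) (Rm1 p)"
  unfolding invp_def
proof (intro conjI allI impI)
  show "length (Rm1 p) = n - 1" by (rule Rm1_len)
  fix j assume j: "j < n - 1"
  have y: "2 \<le> p!(j+1) \<and> p!(j+1) \<le> n" using pother[of "j+1"] j by auto
  have e: "Rm1 p ! j = p!(j+1) - 1" using Rm1_nth[OF j] .
  show "1 \<le> Rm1 p ! j" using y e by linarith
  show "Rm1 p ! j \<le> n - 1" using y e by linarith
  have lt: "p!(j+1) - 2 < n - 1" using y by auto
  have "Rm1 p ! (Rm1 p ! j - 1) = Rm1 p ! (p!(j+1) - 2)" using Rm1_nth[OF j] by (simp add: numeral_2_eq_2)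
  also have "\<dots> = p!(p!(j+1) - 2 + 1) - 1" using Rm1_nth[OF lt] by simp
  also have "p!(j+1) - 2 + 1 = p!(j+1) - 1" using y by linarith
  also have "p!(p!(j+1) - 1) = j + 2" using ip j by (simp add: invp_def)
  finally show "Rm1 p ! (Rm1 p ! j - 1) = j + 1" by simp
qed

lemma IR1: "Ins1 (Rm1 p) = p"
proof (rule nth_equalityI)
  show "length (Ins1 (Rm1 p)) = length p" using Rm1_len lenp n1 by (simp add: Ins1_def)
  fix i assume "i < length (Ins1 (Rm1 p))"
  hence i: "i < n" using Rm1_len n1 by (simp add: Ins1_def)
  show "Ins1 (Rm1 p) ! i = p ! i"
  proof (cases i)
    case 0 thus ?thesis using p0 by (simp add: Ins1_def)
  next
    case (Suc i')
    hence "i' < n - 1" using i by simp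
    thus ?thesis using Suc Rm1_vals Rm1_len by (simp add: Ins1_def)
  qed
qed

lemma cnt_Rm1: assumes j: "j < n - 1" shows "cnt (Rm1 p) j = cnt p (j+1)"
proof (rule cnt_shift)
  show "length (Rm1 p) = length p - 1" using Rm1_len lenp by simp
  show "j < length (Rm1 p)" using j Rm1_len by simp
  fix l assume "l < length (Rm1 p)"
  thus "p!(l+1) = Suc (Rm1 p ! l)" using Rm1_vals Rm1_len by simp
qed

lemma avA_Rm1: "avA k p \<longleftrightarrow> avF k (Rm1 p)"
proof
  assume av: "avA k p"
  show "avF k (Rm1 p)" unfolding avF_def
  proof (intro allI impI notI)
    fix j assume j: "j < length (Rm1 p)" and b: "bad k (Rm1 p) j"
    have jn: "j < n - 1" using j Rm1_len by simp
    have bb: "bad k p (j+1)" using b cnt_Rm1[OF jn] by (simp add: bad_def)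
    have lt: "p!0 < p!(j+1)"
    proof -
      have "j + 1 < n" using jn by simp
      thus ?thesis using p0 pother[of "j+1"] by simp
    qed
    have jl: "j + 1 < length p" using jn lenp by simp
    have "\<not> bad k p (j+1)" using av[unfolded avA_def, rule_format, of 0 "j+1"] lt jl by simp
    thus False using bb by blast
  qed
next
  assume av: "avF k (Rm1 p)"
  show "avA k p" unfolding avA_def
  proof (intro allI impI notI)
    fix i j assume h: "i < j \<and> j < length p \<and> p!i < p!j" and b: "bad k p j"
    obtain j' where j': "j = Suc j'" using h by (cases j) auto
    have jn: "j' < n - 1" using h j' lenp by auto
    have bb: "bad k (Rm1 p) j'" using b cnt_Rm1[OF jn] j' by (simp add: bad_def)
    have "j' < length (Rm1 p)" using jn Rm1_len by simp
    hence "\<not> bad k (Rm1 p) j'" using av[unfolded avF_def, rule_format, of j'] by simp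
    thus False using bb by blast
  qed
qed

end

lemma invp_range: "invp n p \<Longrightarrow> i < n \<Longrightarrow> 1 \<le> p!i \<and> p!i \<le> n"
  unfolding invp_def by blast
lemma invp_inv: "invp n p \<Longrightarrow> i < n \<Longrightarrow> p!(p!i - 1) = i + 1"
  unfolding invp_def by blast
lemma invp_len: "invp n p \<Longrightarrow> length p = n"
  unfolding invp_def by blast

lemma Ins1_nth0: "Ins1 s ! 0 = 1" by (simp add: Ins1_def)
lemma Ins1_nthS: "i < length s \<Longrightarrow> Ins1 s ! Suc i = Suc (s ! i)" by (simp add: Ins1_def)
lemma Ins1_len: "length (Ins1 s) = length s + 1" by (simp add: Ins1_def)

lemma Ins1_props:
  assumes hs: "invp (n-1) s" and n1: "1 \<le> n"
  shows "invp n (Ins1 s) \<and> Ins1 s ! 0 = 1"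
proof -
  have ls: "length s = n - 1" using invp_len[OF hs] .
  have "invp n (Ins1 s)"
    unfolding invp_def
  proof (intro conjI allI impI)
    show "length (Ins1 s) = n" using ls n1 Ins1_len by simp
    fix i assume i: "i < n"
    have rg: "1 \<le> Ins1 s ! i \<and> Ins1 s ! i \<le> n"
    proof (cases i)
      case 0 thus ?thesis using n1 Ins1_nth0 by simp
    next
      case (Suc i')
      hence i': "i' < n - 1" using i by simp
      have r: "1 \<le> s!i' \<and> s!i' \<le> n - 1" using invp_range[OF hs i'] .
      have "Ins1 s ! i = Suc (s!i')" using Suc Ins1_nthS[of i' s] i' ls by simp
      thus ?thesis using r n1 by linarith
    qed
    show "1 \<le> Ins1 s ! i" using rg by simp
    show "Ins1 s ! i \<le> n" using rg by simp
    show "Ins1 s ! (Ins1 s ! i - 1) = i + 1"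
    proof (cases i)
      case 0 thus ?thesis using Ins1_nth0 by simp
    next
      case (Suc i')
      hence i': "i' < n - 1" using i by simp
      have r: "1 \<le> s!i' \<and> s!i' \<le> n - 1" using invp_range[OF hs i'] .
      have r2: "s!(s!i' - 1) = i' + 1" using invp_inv[OF hs i'] .
      have e: "Ins1 s ! i = Suc (s!i')" using Suc Ins1_nthS[of i' s] i' ls by simp
      obtain q where q: "s!i' = Suc q" using r by (cases "s!i'") auto
      have ql: "q < length s" using q r ls by simp
      have "Ins1 s ! (Ins1 s ! i - 1) = Ins1 s ! Suc q" using e q by simp
      also have "\<dots> = Suc (s ! q)" using Ins1_nthS[OF ql] .
      also have "s ! q = i' + 1" using r2 q by simp
      finally show ?thesis using Suc by simp
    qed
  qed
  thus ?thesis using Ins1_nth0 by simp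
qed

lemma RI1: "Rm1 (Ins1 s) = s"
proof (rule nth_equalityI)
  show "length (Rm1 (Ins1 s)) = length s" by (simp add: Rm1_def Ins1_len)
  fix j assume "j < length (Rm1 (Ins1 s))"
  hence j: "j < length s" by (simp add: Rm1_def Ins1_len)
  have "Rm1 (Ins1 s) ! j = Ins1 s ! (j+1) - 1" using j by (simp add: Rm1_def Ins1_len)
  also have "\<dots> = s ! j" using Ins1_nthS[OF j] by simp
  finally show "Rm1 (Ins1 s) ! j = s ! j" .
qed

lemma Rm1_bij:
  assumes n1: "1 \<le> n"
  shows "bij_betw Rm1 {p. invp n p \<and> p!0 = 1} {s. invp (n-1) s}"
proof (rule bij_betw_byWitness[where f' = Ins1])
  show "\<forall>a\<in>{p. invp n p \<and> p ! 0 = 1}. Ins1 (Rm1 a) = a"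
    using rm1ctx.IR1 rm1ctx.intro n1 by blast
  show "\<forall>a'\<in>{s. invp (n - 1) s}. Rm1 (Ins1 a') = a'" using RI1 by blast
  show "Rm1 ` {p. invp n p \<and> p ! 0 = 1} \<subseteq> {s. invp (n - 1) s}"
    using rm1ctx.Rm1_invp rm1ctx.intro n1 by blast
  show "Ins1 ` {s. invp (n - 1) s} \<subseteq> {p. invp n p \<and> p ! 0 = 1}"
    using Ins1_props n1 by blast
qed


lemma finite_invp: "finite {p. invp n p}"
proof -
  have "{p. invp n p} \<subseteq> {xs. set xs \<subseteq> {0..n} \<and> length xs = n}"
  proof
    fix p assume "p \<in> {p. invp n p}"
    hence ip: "invp n p" by simp
    have "set p \<subseteq> {0..n}"
    proof
      fix x assume "x \<in> set p"
      then obtain i where "i < length p" "p!i = x" by (metis in_set_conv_nth)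
      thus "x \<in> {0..n}" using invp_range[OF ip, of i] invp_len[OF ip] by simp
    qed
    thus "p \<in> {xs. set xs \<subseteq> {0..n} \<and> length xs = n}" using invp_len[OF ip] by simp
  qed
  moreover have "finite {xs. set xs \<subseteq> {0..n} \<and> length xs = n}"
    by (rule finite_lists_length_eq) simp
  ultimately show ?thesis by (rule finite_subset)
qed

lemma card_partition:
  assumes fA: "finite A" and fT: "finite T" and im: "\<forall>x\<in>A. f x \<in> T"
  shows "card A = (\<Sum>t\<in>T. card {x\<in>A. f x = t})"
proof -
  have "A = (\<Union>t\<in>T. {x\<in>A. f x = t})" using im by blast
  moreover have "card (\<Union>t\<in>T. {x\<in>A. f x = t}) = (\<Sum>t\<in>T. card {x\<in>A. f x = t})"
    by (rule card_UN_disjoint) (use fT fA in auto)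
  ultimately show ?thesis by simp
qed

lemma gt_eq: "3 \<le> k \<Longrightarrow> gt k n t = card {p. invp n p \<and> avA k p \<and> p!0 = t}"
  unfolding gt_def using Ical_A by simp

lemma g_eq: "3 \<le> k \<Longrightarrow> g k n = card {p. invp n p \<and> avA k p}"
  unfolding g_def using Ical_A by simp

lemma f_eq: "3 \<le> k \<Longrightarrow> f (k-1) n = card {p. invp n p \<and> avF k p}"
  unfolding f_def using Ical_F by simp

lemma gt_Rm:
  assumes k3: "3 \<le> k" and t2: "2 \<le> t" and tn: "t \<le> n"
  shows "gt k n t = card {s. invp (n-2) s \<and> avA k s \<and> ok k t s}"
proof -
  have e1: "{p. invp n p \<and> avA k p \<and> p!0 = t} = {p \<in> {p. invp n p \<and> p!0 = t}. avA k p}" by blast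
  have e2: "{s. invp (n-2) s \<and> avA k s \<and> ok k t s} = {s \<in> {s. invp (n-2) s}. avA k s \<and> ok k t s}" by blast
  have "gt k n t = card {p \<in> {p. invp n p \<and> p!0 = t}. avA k p}"
    by (simp only: gt_eq[OF k3] e1)
  also have "\<dots> = card {s \<in> {s. invp (n-2) s}. avA k s \<and> ok k t s}"
  proof (rule card_transfer[OF Rm_bij[OF t2 tn]])
    show "\<forall>x\<in>{p. invp n p \<and> p ! 0 = t}. avA k x = (avA k (Rm t x) \<and> ok k t (Rm t x))"
    proof
      fix x assume "x \<in> {p. invp n p \<and> p ! 0 = t}"
      hence "rmctx n t x" using t2 tn by (intro rmctx.intro) auto
      thus "avA k x = (avA k (Rm t x) \<and> ok k t (Rm t x))" by (rule rmctx.avA_Rm)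
    qed
  qed
  also have "\<dots> = card {s. invp (n-2) s \<and> avA k s \<and> ok k t s}" by (simp only: e2)
  finally show ?thesis .
qed

lemma gt_one:
  assumes k3: "3 \<le> k" and n1: "1 \<le> n"
  shows "gt k n 1 = f (k-1) (n-1)"
proof -
  have e1: "{p. invp n p \<and> avA k p \<and> p!0 = 1} = {p \<in> {p. invp n p \<and> p!0 = 1}. avA k p}" by blast
  have e2: "{s. invp (n-1) s \<and> avF k s} = {s \<in> {s. invp (n-1) s}. avF k s}" by blast
  have "gt k n 1 = card {p \<in> {p. invp n p \<and> p!0 = 1}. avA k p}"
    by (simp only: gt_eq[OF k3] e1)
  also have "\<dots> = card {s \<in> {s. invp (n-1) s}. avF k s}"
  proof (rule card_transfer[OF Rm1_bij[OF n1]])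
    show "\<forall>x\<in>{p. invp n p \<and> p ! 0 = 1}. avA k x = avF k (Rm1 x)"
    proof
      fix x assume "x \<in> {p. invp n p \<and> p ! 0 = 1}"
      hence "rm1ctx n x" using n1 by (intro rm1ctx.intro) auto
      thus "avA k x = avF k (Rm1 x)" by (rule rm1ctx.avA_Rm1)
    qed
  qed
  also have "\<dots> = f (k-1) (n-1)" by (simp only: f_eq[OF k3] e2)
  finally show ?thesis .
qed

lemma avF_avA: "avF k s \<Longrightarrow> avA k s"
  unfolding avF_def avA_def by auto

lemma ok2: assumes "invp m s" shows "ok k 2 s \<longleftrightarrow> avF k s"
proof
  assume o: "ok k 2 s"
  show "avF k s" unfolding avF_def
  proof (intro allI impI notI)
    fix j assume j: "j < length s" and b: "bad k s j"
    have "s!j + 2 \<le> 2" using o j b unfolding ok_def by blast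
    moreover have "1 \<le> s!j" using invp_range[OF assms, of j] invp_len[OF assms] j by simp
    ultimately show False by simp
  qed
next
  assume "avF k s" thus "ok k 2 s" unfolding avF_def ok_def by blast
qed

lemma gt_two:
  assumes k3: "3 \<le> k" and n2: "2 \<le> n"
  shows "gt k n 2 = f (k-1) (n-2)"
proof -
  have "{s. invp (n-2) s \<and> avA k s \<and> ok k 2 s} = {s. invp (n-2) s \<and> avF k s}"
  proof (rule set_eqI)
    fix s
    show "s \<in> {s. invp (n-2) s \<and> avA k s \<and> ok k 2 s} \<longleftrightarrow> s \<in> {s. invp (n-2) s \<and> avF k s}"
    proof (cases "invp (n-2) s")
      case True
      thus ?thesis using ok2[OF True, of k] avF_avA[of k s] by auto
    qed simp
  qed
  thus ?thesis using gt_Rm[OF k3 _ n2] f_eq[OF k3] by simp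
qed

lemma cnt_le_pos: "j < length s \<Longrightarrow> cnt s j + j + 1 \<le> length s"
proof -
  assume j: "j < length s"
  have "{l. j < l \<and> l < length s \<and> s!j < s!l} \<subseteq> {j+1..<length s}" by auto
  hence "cnt s j \<le> card {j+1..<length s}" unfolding cnt_def by (intro card_mono) auto
  thus ?thesis using j by simp
qed

lemma cnt_le_val: assumes ip: "invp m s" and j: "j < m" shows "cnt s j + s!j \<le> m"
proof -
  let ?S = "{l. j < l \<and> l < length s \<and> s!j < s!l}"
  have "inj_on (\<lambda>l. s!l) ?S"
  proof (rule inj_onI)
    fix x y assume "x \<in> ?S" "y \<in> ?S" "s!x = s!y"
    thus "x = y" using invp_inj[OF ip] invp_len[OF ip] by auto
  qed
  moreover have "(\<lambda>l. s!l) ` ?S \<subseteq> {s!j+1..m}"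
  proof
    fix x assume "x \<in> (\<lambda>l. s!l) ` ?S"
    then obtain l where "l \<in> ?S" "x = s!l" by blast
    thus "x \<in> {s!j+1..m}" using invp_range[OF ip, of l] invp_len[OF ip] by auto
  qed
  ultimately have "cnt s j \<le> card {s!j+1..m}" unfolding cnt_def
    by (intro card_inj_on_le) auto
  moreover have "s!j \<le> m" using invp_range[OF ip j] by simp
  ultimately show ?thesis by simp
qed

lemma nobad_short: "length s + 2 \<le> k \<Longrightarrow> j < length s \<Longrightarrow> \<not> bad k s j"
  using cnt_le_pos[of j s] unfolding bad_def by simp

lemma cnt_first:
  assumes ip: "invp m s" and m1: "1 \<le> m"
  shows "cnt s 0 = m - s!0"
proof -
  let ?S = "{l. 0 < l \<and> l < length s \<and> s!0 < s!l}"
  have ls: "length s = m" using invp_len[OF ip] .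
  have inj: "inj_on (\<lambda>l. s!l) ?S"
  proof (rule inj_onI)
    fix x y assume "x \<in> ?S" "y \<in> ?S" "s!x = s!y"
    thus "x = y" using invp_inj[OF ip] ls by auto
  qed
  have st: "set s = {1..m}" using invp_iff[of s m] ip by (simp add: perms_def)
  have "(\<lambda>l. s!l) ` ?S = {s!0+1..m}"
  proof
    show "(\<lambda>l. s!l) ` ?S \<subseteq> {s!0+1..m}"
    proof
      fix x assume "x \<in> (\<lambda>l. s!l) ` ?S"
      then obtain l where "l \<in> ?S" "x = s!l" by blast
      thus "x \<in> {s!0+1..m}" using invp_range[OF ip, of l] ls by auto
    qed
    show "{s!0+1..m} \<subseteq> (\<lambda>l. s!l) ` ?S"
    proof
      fix x assume x: "x \<in> {s!0+1..m}"
      hence "x \<in> set s" using st by auto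
      then obtain l where l: "l < length s" "s!l = x" by (metis in_set_conv_nth)
      have "l \<noteq> 0"
      proof
        assume "l = 0" thus False using l x by simp
      qed
      hence "l \<in> ?S" using l x by auto
      thus "x \<in> (\<lambda>l. s!l) ` ?S" using l by blast
    qed
  qed
  hence "card ?S = card {s!0+1..m}" using card_image[OF inj] by simp
  thus ?thesis unfolding cnt_def by simp
qed

lemma lrmin:
  assumes ip: "invp m s" and av: "avA k s" and b: "bad k s j" and ij: "i < j" and jm: "j < m"
  shows "s!j < s!i"
proof -
  have "\<not> s!i < s!j" using av[unfolded avA_def, rule_format, of i j] b ij jm invp_len[OF ip] by auto
  moreover have "s!i \<noteq> s!j" using invp_inj[OF ip, of i j] ij jm by auto
  ultimately show ?thesis by simp
qed

lemma bad_bounds: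
  assumes ip: "invp m s" and av: "avA k s" and b: "bad k s j" and jm: "j < m"
  shows "s!j \<le> s!0 \<and> j + 1 \<le> s!0"
proof -
  have m0: "0 < m" using jm by simp
  have r0: "1 \<le> s!0 \<and> s!0 \<le> m" using invp_range[OF ip m0] .
  have c1: "s!j \<le> s!0"
  proof (cases "j = 0")
    case True thus ?thesis by simp
  next
    case False thus ?thesis using lrmin[OF ip av b _ jm, of 0] by simp
  qed
  have q: "s!(s!0 - 1) = 1" using invp_inv[OF ip m0] by simp
  have c2: "j + 1 \<le> s!0"
  proof (rule ccontr)
    assume "\<not> j + 1 \<le> s!0"
    hence "s!0 - 1 < j" using r0 by linarith
    hence "s!j < s!(s!0 - 1)" using lrmin[OF ip av b _ jm] by blast
    moreover have "1 \<le> s!j" using invp_range[OF ip jm] by simp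
    ultimately show False using q by simp
  qed
  show ?thesis using c1 c2 by simp
qed

lemma ok_of_first:
  assumes ip: "invp m s" and av: "avA k s" and st: "s!0 + 2 \<le> t"
  shows "ok k t s"
  unfolding ok_def
proof (intro allI impI)
  fix j assume j: "j < length s" and b: "bad k s j"
  have "s!j \<le> s!0 \<and> j + 1 \<le> s!0" using bad_bounds[OF ip av b] j invp_len[OF ip] by simp
  thus "s!j + 2 \<le> t \<and> j + 3 \<le> t" using st by simp
qed

lemma first_bad:
  assumes ip: "invp m s" and m1: "1 \<le> m" and sk: "s!0 + k \<le> m + 2"
  shows "bad k s 0"
  using cnt_first[OF ip m1] sk unfolding bad_def by simp

lemma ok_typeA:
  assumes ip: "invp m s" and av: "avA k s" and m1: "1 \<le> m" and sk: "s!0 + k \<le> m + 2"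
  shows "ok k t s \<longleftrightarrow> s!0 + 2 \<le> t"
proof
  assume "ok k t s"
  moreover have "bad k s 0" using first_bad[OF ip m1 sk] .
  ultimately show "s!0 + 2 \<le> t" using m1 invp_len[OF ip] unfolding ok_def by auto
next
  assume "s!0 + 2 \<le> t" thus "ok k t s" using ok_of_first[OF ip av] by blast
qed

lemma ok_large: 
  assumes ip: "invp m s" and mt: "m + 2 \<le> t"
  shows "ok k t s"
  unfolding ok_def
proof (intro allI impI)
  fix j assume j: "j < length s"
  have "s!j \<le> m" using invp_range[OF ip, of j] j invp_len[OF ip] by simp
  thus "s!j + 2 \<le> t \<and> j + 3 \<le> t" using j invp_len[OF ip] mt by simp
qed


lemma card_partition2:
  assumes fA: "finite A" and fT: "finite T" and im: "\<forall>x\<in>A. h x \<in> T"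
  shows "card A = (\<Sum>t\<in>T. card {x\<in>A. h x = t})"
proof -
  have "A = (\<Union>t\<in>T. {x\<in>A. h x = t})" using im by blast
  moreover have "card (\<Union>t\<in>T. {x\<in>A. h x = t}) = (\<Sum>t\<in>T. card {x\<in>A. h x = t})"
    by (rule card_UN_disjoint) (use fT fA in auto)
  ultimately show ?thesis by simp
qed

lemma okB:
  assumes ip: "invp (m-2) u" and k3: "3 \<le> k" and big: "m + 3 \<le> s + k"
  shows "ok k s u"
  unfolding ok_def
proof (intro allI impI)
  fix j assume j: "j < length u" and b: "bad k u j"
  have lu: "length u = m - 2" using invp_len[OF ip] .
  have c1: "k - 2 \<le> cnt u j" using b unfolding bad_def .
  have c2: "cnt u j + u!j \<le> m - 2" using cnt_le_val[OF ip] j lu by simp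
  have c3: "cnt u j + j + 1 \<le> m - 2" using cnt_le_pos[OF j] lu by simp
  show "u!j + 2 \<le> s \<and> j + 3 \<le> s" using c1 c2 c3 big k3 by linarith
qed

locale bctx =
  fixes m s k :: nat and p :: "nat list"
  assumes ip: "invp m p" and p0: "p!0 = s" and s2: "2 \<le> s" and sm: "s \<le> m"
    and big: "m + 3 \<le> s + k" and k3: "3 \<le> k"
begin

lemma rc: "rmctx m s p" using ip p0 s2 sm by (intro rmctx.intro) auto

lemma tinv: "invp (m-2) (Rm s p)" using rmctx.Rm_invp[OF rc] .

lemma avA_eq: "avA k p \<longleftrightarrow> avA k (Rm s p)"
  using rmctx.avA_Rm[OF rc, of k] okB[OF tinv k3 big] by blast

lemma nb0: "\<not> bad k p 0"
proof -
  have "cnt p 0 = m - s" using cnt_first[OF ip] p0 sm s2 by simp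
  thus ?thesis using big k3 unfolding bad_def by linarith
qed

lemma nbs: "\<not> bad k p (s-1)"
proof -
  have "cnt p (s-1) + (s-1) + 1 \<le> m" using cnt_le_pos[of "s-1" p] invp_len[OF ip] sm s2 by simp
  thus ?thesis using big k3 s2 unfolding bad_def by linarith
qed

lemma badt:
  assumes j: "j < m - 2" and b: "bad k (Rm s p) j"
  shows "posm s j = j + 1 \<and> p!(j+1) = Rm s p ! j + 1 \<and> j + 3 \<le> s \<and> Rm s p ! j + 2 \<le> s"
proof -
  have jl: "j < length (Rm s p)" using j invp_len[OF tinv] by simp
  have o: "Rm s p ! j + 2 \<le> s \<and> j + 3 \<le> s"
    using okB[OF tinv k3 big, unfolded ok_def, rule_format, OF jl b] .
  hence ps: "posm s j = j + 1" unfolding posm_def by simp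
  have "p ! posm s j = inc s (Rm s p ! j)" using rmctx.Rm_vals[OF rc j] .
  moreover have "inc s (Rm s p ! j) = Rm s p ! j + 1" using o unfolding inc_def by simp
  ultimately show ?thesis using ps o by simp
qed

lemma ok_eq:
  assumes t3: "3 \<le> t"
  shows "ok k t p \<longleftrightarrow> ok k (t-1) (Rm s p)"
proof
  assume o: "ok k t p"
  show "ok k (t-1) (Rm s p)" unfolding ok_def
  proof (intro allI impI)
    fix j assume jl: "j < length (Rm s p)" and b: "bad k (Rm s p) j"
    have j: "j < m - 2" using jl invp_len[OF tinv] by simp
    have bt: "posm s j = j + 1 \<and> p!(j+1) = Rm s p ! j + 1 \<and> j + 3 \<le> s \<and> Rm s p ! j + 2 \<le> s"
      using badt[OF j b] .
    have "bad k p (posm s j)" using rmctx.bad_Rm[OF rc j] b by blast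
    hence bp: "bad k p (j+1)" using bt by simp
    have jl1: "j + 1 < length p" using j invp_len[OF ip] by simp
    have "p!(j+1) + 2 \<le> t \<and> j + 1 + 3 \<le> t" using o[unfolded ok_def, rule_format, OF jl1 bp] .
    thus "Rm s p ! j + 2 \<le> t - 1 \<and> j + 3 \<le> t - 1" using bt by linarith
  qed
next
  assume o: "ok k (t-1) (Rm s p)"
  show "ok k t p" unfolding ok_def
  proof (intro allI impI)
    fix l assume ll: "l < length p" and b: "bad k p l"
    have l: "l < m" using ll invp_len[OF ip] by simp
    have l0: "l \<noteq> 0"
    proof
      assume "l = 0" thus False using b nb0 by simp
    qed
    have ls: "l \<noteq> s - 1"
    proof
      assume "l = s - 1" thus False using b nbs by simp
    qed
    define j where "j = unpos s l"
    have j: "j < m - 2" using rmctx.unpos_lt[OF rc l l0 ls] j_def by simp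
    have pj: "posm s j = l" using a6[OF s2 l0 ls] j_def by simp
    have bt0: "bad k (Rm s p) j" using rmctx.bad_Rm[OF rc j] b pj by simp
    have bt: "posm s j = j + 1 \<and> p!(j+1) = Rm s p ! j + 1 \<and> j + 3 \<le> s \<and> Rm s p ! j + 2 \<le> s"
      using badt[OF j bt0] .
    have jl: "j < length (Rm s p)" using j invp_len[OF tinv] by simp
    have oo: "Rm s p ! j + 2 \<le> t - 1 \<and> j + 3 \<le> t - 1"
      using o[unfolded ok_def, rule_format, OF jl bt0] .
    have o1: "Rm s p ! j + 2 \<le> t - 1" using oo by blast
    have o2: "j + 3 \<le> t - 1" using oo by blast
    have le: "l = j + 1" using bt pj by simp
    have pl: "p!l = Rm s p ! j + 1" using bt le by simp
    show "p!l + 2 \<le> t \<and> l + 3 \<le> t" using o1 o2 le pl t3 by linarith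
  qed
qed

end

lemma dB:
  assumes k3: "3 \<le> k" and s2: "2 \<le> s" and sm: "s \<le> m" and big: "m + 3 \<le> s + k" and t3: "3 \<le> t"
  shows "card {p. invp m p \<and> avA k p \<and> ok k t p \<and> p!0 = s}
       = card {u. invp (m-2) u \<and> avA k u \<and> ok k (t-1) u}"
proof -
  have e1: "{p. invp m p \<and> avA k p \<and> ok k t p \<and> p!0 = s} = {p \<in> {p. invp m p \<and> p!0 = s}. avA k p \<and> ok k t p}"
    by blast
  have e2: "{u. invp (m-2) u \<and> avA k u \<and> ok k (t-1) u} = {u \<in> {u. invp (m-2) u}. avA k u \<and> ok k (t-1) u}"
    by blast
  have "card {p \<in> {p. invp m p \<and> p!0 = s}. avA k p \<and> ok k t p} = card {u \<in> {u. invp (m-2) u}. avA k u \<and> ok k (t-1) u}"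
  proof (rule card_transfer[OF Rm_bij[OF s2 sm]])
    show "\<forall>x\<in>{p. invp m p \<and> p ! 0 = s}. (avA k x \<and> ok k t x) = (avA k (Rm s x) \<and> ok k (t - 1) (Rm s x))"
    proof
      fix x assume "x \<in> {p. invp m p \<and> p ! 0 = s}"
      hence "bctx m s k x" using s2 sm big k3 by (intro bctx.intro) auto
      thus "(avA k x \<and> ok k t x) = (avA k (Rm s x) \<and> ok k (t - 1) (Rm s x))"
        using bctx.avA_eq bctx.ok_eq[OF _ t3] by blast
    qed
  qed
  thus ?thesis by (simp only: e1 e2)
qed

lemma dA:
  assumes k3: "3 \<le> k" and s1: "1 \<le> s" and sm: "s \<le> m" and nb: "\<not> (2 \<le> s \<and> m + 3 \<le> s + k)"
    and t3: "3 \<le> t"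
  shows "card {p. invp m p \<and> avA k p \<and> ok k t p \<and> p!0 = s} = (if s + 2 \<le> t then gt k m s else 0)"
proof -
  have m1: "1 \<le> m" using s1 sm by simp
  have gte: "gt k m s = card {p. invp m p \<and> avA k p \<and> p!0 = s}" using gt_eq[OF k3] .
  show ?thesis
  proof (cases "s + k \<le> m + 2")
    case True
    have "{p. invp m p \<and> avA k p \<and> ok k t p \<and> p!0 = s} = (if s + 2 \<le> t then {p. invp m p \<and> avA k p \<and> p!0 = s} else {})"
    proof (rule set_eqI)
      fix p
      show "p \<in> {p. invp m p \<and> avA k p \<and> ok k t p \<and> p!0 = s} \<longleftrightarrow> p \<in> (if s + 2 \<le> t then {p. invp m p \<and> avA k p \<and> p!0 = s} else {})"
      proof (cases "invp m p \<and> avA k p \<and> p!0 = s")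
        case h: True
        have "ok k t p \<longleftrightarrow> s + 2 \<le> t" using ok_typeA[of m p k t] h m1 True by auto
        thus ?thesis using h by auto
      next
        case False thus ?thesis by auto
      qed
    qed
    thus ?thesis using gte by simp
  next
    case False
    hence s1': "s = 1" and mk: "m + 2 \<le> k" using nb s1 by auto
    have "{p. invp m p \<and> avA k p \<and> ok k t p \<and> p!0 = s} = {p. invp m p \<and> avA k p \<and> p!0 = s}"
    proof (rule set_eqI)
      fix p
      show "p \<in> {p. invp m p \<and> avA k p \<and> ok k t p \<and> p!0 = s} \<longleftrightarrow> p \<in> {p. invp m p \<and> avA k p \<and> p!0 = s}"
      proof (cases "invp m p")
        case True
        have "ok k t p" unfolding ok_def using nobad_short[of p k] invp_len[OF True] mk by auto
        thus ?thesis by auto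
      qed auto
    qed
    thus ?thesis using gte s1' t3 by simp
  qed
qed

lemma gt_part:
  assumes k3: "3 \<le> k" and n3: "3 \<le> n" and t2: "2 \<le> t" and tn: "t \<le> n"
  shows "gt k n t = (\<Sum>s=1..n-2. card {p. invp (n-2) p \<and> avA k p \<and> ok k t p \<and> p!0 = s})"
proof -
  let ?A = "{p. invp (n-2) p \<and> avA k p \<and> ok k t p}"
  have fA: "finite ?A" by (rule finite_subset[OF _ finite_invp[of "n-2"]]) blast
  have im: "\<forall>x\<in>?A. x!0 \<in> {1..n-2}"
  proof
    fix x assume "x \<in> ?A"
    hence "invp (n-2) x" by simp
    thus "x!0 \<in> {1..n-2}" using invp_range[of "n-2" x 0] n3 by simp
  qed
  have "gt k n t = card ?A" using gt_Rm[OF k3 t2 tn] .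
  also have "\<dots> = (\<Sum>s\<in>{1..n-2}. card {x\<in>?A. x!0 = s})" by (rule card_partition2[OF fA finite_atLeastAtMost im])
  also have "\<dots> = (\<Sum>s=1..n-2. card {p. invp (n-2) p \<and> avA k p \<and> ok k t p \<and> p!0 = s})"
  proof (rule sum.cong)
    fix s
    have "{x\<in>?A. x!0 = s} = {p. invp (n-2) p \<and> avA k p \<and> ok k t p \<and> p!0 = s}" by blast
    thus "card {x\<in>?A. x!0 = s} = card {p. invp (n-2) p \<and> avA k p \<and> ok k t p \<and> p!0 = s}" by (simp only:)
  qed simp
  finally show ?thesis .
qed

lemma g_part:
  assumes k3: "3 \<le> k" and m1: "1 \<le> m"
  shows "g k m = (\<Sum>s=1..m. gt k m s)"
proof -
  let ?A = "{p. invp m p \<and> avA k p}"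
  have fA: "finite ?A" by (rule finite_subset[OF _ finite_invp[of m]]) blast
  have im: "\<forall>x\<in>?A. x!0 \<in> {1..m}"
  proof
    fix x assume "x \<in> ?A"
    hence "invp m x" by simp
    thus "x!0 \<in> {1..m}" using invp_range[of m x 0] m1 by simp
  qed
  have "g k m = card ?A" using g_eq[OF k3] .
  also have "\<dots> = (\<Sum>s\<in>{1..m}. card {x\<in>?A. x!0 = s})" by (rule card_partition2[OF fA finite_atLeastAtMost im])
  also have "\<dots> = (\<Sum>s=1..m. gt k m s)"
  proof (rule sum.cong)
    fix s
    have "{x\<in>?A. x!0 = s} = {p. invp m p \<and> avA k p \<and> p!0 = s}" by blast
    thus "card {x\<in>?A. x!0 = s} = gt k m s" using gt_eq[OF k3] by (simp only:)
  qed simp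
  finally show ?thesis .
qed

lemma gt_B:
  assumes k3: "3 \<le> k" and s2: "2 \<le> s" and sm: "s \<le> m" and big: "m + 3 \<le> s + k"
  shows "gt k m s = g k (m-2)"
proof -
  have "{u. invp (m-2) u \<and> avA k u \<and> ok k s u} = {u. invp (m-2) u \<and> avA k u}"
    using okB[OF _ k3 big] by blast
  thus ?thesis using gt_Rm[OF k3 s2 sm] g_eq[OF k3] by simp
qed

lemma all_ok:
  assumes k3: "3 \<le> k" and mt: "m \<le> t'" and m2: "2 \<le> m"
  shows "card {u. invp (m-2) u \<and> avA k u \<and> ok k t' u} = g k (m-2)"
proof -
  have "{u. invp (m-2) u \<and> avA k u \<and> ok k t' u} = {u. invp (m-2) u \<and> avA k u}"
  proof (rule set_eqI)
    fix u
    show "u \<in> {u. invp (m-2) u \<and> avA k u \<and> ok k t' u} \<longleftrightarrow> u \<in> {u. invp (m-2) u \<and> avA k u}"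
    proof (cases "invp (m-2) u")
      case True
      have "ok k t' u" using ok_large[OF True, of t' k] mt m2 by simp
      thus ?thesis by auto
    qed auto
  qed
  thus ?thesis using g_eq[OF k3] by simp
qed


lemma geo:
  fixes v :: real
  assumes c1: "1 \<le> c" and cn: "c \<le> Suc n"
  shows "(1 - v) * (\<Sum>t=c..n. v^(t-1)) = v^(c-1) - v^n"
proof -
  obtain c' where c': "c = Suc c'" using c1 by (cases c) auto
  show ?thesis
  proof (cases n)
    case 0 thus ?thesis using c' cn by simp
  next
    case (Suc n')
    have "(\<Sum>t=c..n. v^(t-1)) = (\<Sum>i=c'..n'. v^(Suc i - 1))"
      unfolding c' Suc by (rule sum.shift_bounds_cl_Suc_ivl)
    also have "\<dots> = (\<Sum>i=c'..n'. v^i)" by simp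
    finally have e: "(\<Sum>t=c..n. v^(t-1)) = (\<Sum>i=c'..n'. v^i)" .
    show ?thesis
    proof (cases "c' \<le> n'")
      case True
      have "(1 - v) * (\<Sum>i=c'..n'. v^i) = v^c' - v^Suc n'" by (rule sum_gp_multiplied[OF True])
      thus ?thesis using e c' Suc by simp
    next
      case False
      hence "c' = Suc n'" using cn c' Suc by simp
      thus ?thesis using e c' Suc by simp
    qed
  qed
qed

lemma sum_if_ge:
  fixes x :: "nat \<Rightarrow> real"
  assumes "3 \<le> c"
  shows "(\<Sum>t=3..n. if c \<le> t then x t else 0) = (\<Sum>t=c..n. x t)"
proof -
  have e: "{t\<in>{3..n}. c \<le> t} = {c..n}" using assms by auto
  have "(\<Sum>t\<in>{t\<in>{3..n}. c \<le> t}. x t) = (\<Sum>t=3..n. if c \<le> t then x t else 0)"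
    by (rule sum.inter_filter) simp
  thus ?thesis by (simp only: e)
qed

lemma powi_neg:
  assumes v0: "(v::real) \<noteq> 0" and k3: "3 \<le> k"
  shows "v powi (3 - int k) = 1 / v^(k-3)"
proof -
  have e: "3 - int k = - int (k - 3)" using k3 by simp
  have "v powi (3 - int k) = v powi (- int (k - 3))" by (simp only: e)
  also have "\<dots> = inverse (v powi int (k - 3))" by (rule power_int_minus)
  also have "\<dots> = inverse (v ^ (k - 3))" by (simp only: power_int_of_nat)
  also have "\<dots> = 1 / v ^ (k - 3)" by (rule inverse_eq_divide)
  finally show ?thesis .
qed


definition aa :: "nat \<Rightarrow> nat \<Rightarrow> nat \<Rightarrow> real" where "aa k m s = real (gt k m s)"
definition hh :: "nat \<Rightarrow> nat \<Rightarrow> real" where "hh k m = real (g k (m-2))"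
definition Bset :: "nat \<Rightarrow> nat \<Rightarrow> nat set" where "Bset k m = {s \<in> {1..m}. 2 \<le> s \<and> m + 3 \<le> s + k}"
definition DD :: "nat \<Rightarrow> nat \<Rightarrow> nat \<Rightarrow> nat \<Rightarrow> real" where
  "DD k m s t = (if s \<in> Bset k m then (if t \<le> m + 1 then aa k m (t-1) else hh k m)
                 else (if s + 2 \<le> t then aa k m s else 0))"
definition WW :: "nat \<Rightarrow> nat \<Rightarrow> real \<Rightarrow> real" where
  "WW k m v = (\<Sum>i=2..m. aa k m i * v^i) + hh k m * v^(m+1)"

lemma L1:
  assumes k3: "3 \<le> k" and t3: "3 \<le> t" and tn: "t \<le> m + 2" and s1: "1 \<le> s" and sm: "s \<le> m"
  shows "real (card {p. invp m p \<and> avA k p \<and> ok k t p \<and> p!0 = s}) = DD k m s t"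
proof (cases "s \<in> Bset k m")
  case True
  hence s2: "2 \<le> s" and big: "m + 3 \<le> s + k" by (auto simp: Bset_def)
  have e: "card {p. invp m p \<and> avA k p \<and> ok k t p \<and> p!0 = s} = card {u. invp (m-2) u \<and> avA k u \<and> ok k (t-1) u}"
    using dB[OF k3 s2 sm big t3] .
  show ?thesis
  proof (cases "t \<le> m + 1")
    case True
    have "gt k m (t-1) = card {u. invp (m-2) u \<and> avA k u \<and> ok k (t-1) u}"
      using gt_Rm[OF k3, of "t-1" m] t3 True by simp
    thus ?thesis using e True \<open>s \<in> Bset k m\<close> by (simp add: DD_def aa_def)
  next
    case False
    have "card {u. invp (m-2) u \<and> avA k u \<and> ok k (t-1) u} = g k (m-2)"
      using all_ok[OF k3, of m "t-1"] False s2 sm by simp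
    thus ?thesis using e False \<open>s \<in> Bset k m\<close> by (simp add: DD_def hh_def)
  qed
next
  case False
  hence nb: "\<not> (2 \<le> s \<and> m + 3 \<le> s + k)" using s1 sm by (auto simp: Bset_def)
  show ?thesis using dA[OF k3 s1 sm nb t3] False by (simp add: DD_def aa_def)
qed

lemma L2:
  assumes k3: "3 \<le> k" and m1: "1 \<le> m" and t3: "3 \<le> t" and tn: "t \<le> m + 2"
  shows "real (gt k (m+2) t) = (\<Sum>s=1..m. DD k m s t)"
proof -
  have "gt k (m+2) t = (\<Sum>s=1..m. card {p. invp m p \<and> avA k p \<and> ok k t p \<and> p!0 = s})"
    using gt_part[OF k3, of "m+2" t] m1 t3 tn by simp
  hence "real (gt k (m+2) t) = (\<Sum>s=1..m. real (card {p. invp m p \<and> avA k p \<and> ok k t p \<and> p!0 = s}))"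
    by (simp add: of_nat_sum)
  also have "\<dots> = (\<Sum>s=1..m. DD k m s t)"
    by (rule sum.cong) (use L1[OF k3 t3 tn] in auto)
  finally show ?thesis .
qed


lemma L3nb:
  fixes v :: real
  assumes s1: "1 \<le> s" and sm: "s \<le> m" and nb: "s \<notin> Bset k m"
  shows "(1 - v) * (\<Sum>t=3..m+2. DD k m s t * v^(t-1)) = aa k m s * (v^(s+1) - v^(m+2))"
proof -
  have "(\<Sum>t=3..m+2. DD k m s t * v^(t-1)) = (\<Sum>t=3..m+2. if s + 2 \<le> t then aa k m s * v^(t-1) else 0)"
    by (rule sum.cong) (auto simp: DD_def nb)
  also have "\<dots> = (\<Sum>t=s+2..m+2. aa k m s * v^(t-1))"
    by (rule sum_if_ge) (use s1 in simp)
  also have "\<dots> = aa k m s * (\<Sum>t=s+2..m+2. v^(t-1))" by (simp only: sum_distrib_left)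
  finally have e: "(\<Sum>t=3..m+2. DD k m s t * v^(t-1)) = aa k m s * (\<Sum>t=s+2..m+2. v^(t-1))" .
  have g: "(1 - v) * (\<Sum>t=s+2..m+2. v^(t-1)) = v^(s+2-1) - v^(m+2)"
    by (rule geo) (use sm in simp_all)
  have "(1 - v) * (\<Sum>t=3..m+2. DD k m s t * v^(t-1)) = aa k m s * ((1 - v) * (\<Sum>t=s+2..m+2. v^(t-1)))"
    using e by simp
  also have "\<dots> = aa k m s * (v^(s+1) - v^(m+2))" using g by simp
  finally show ?thesis .
qed

lemma L3b:
  fixes v :: real
  assumes sB: "s \<in> Bset k m"
  shows "(\<Sum>t=3..m+2. DD k m s t * v^(t-1)) = WW k m v"
proof -
  have m2: "2 \<le> m" using sB by (auto simp: Bset_def)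
  have "(\<Sum>t=3..m+2. DD k m s t * v^(t-1)) = (\<Sum>t=3..Suc (m+1). DD k m s t * v^(t-1))" by simp
  also have "\<dots> = (\<Sum>t=3..m+1. DD k m s t * v^(t-1)) + DD k m s (m+2) * v^(m+1)"
    using m2 by (simp add: sum.cl_ivl_Suc)
  also have "DD k m s (m+2) = hh k m" using sB by (simp add: DD_def)
  also have "(\<Sum>t=3..m+1. DD k m s t * v^(t-1)) = (\<Sum>t=3..m+1. aa k m (t-1) * v^(t-1))"
    by (rule sum.cong) (auto simp: DD_def sB)
  also have "\<dots> = (\<Sum>t=Suc 2..Suc m. aa k m (t-1) * v^(t-1))" by simp
  also have "\<dots> = (\<Sum>i=2..m. aa k m (Suc i - 1) * v^(Suc i - 1))" by (rule sum.shift_bounds_cl_Suc_ivl)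
  also have "\<dots> = (\<Sum>i=2..m. aa k m i * v^i)" by simp
  finally show ?thesis by (simp add: WW_def)
qed


definition EE :: "nat \<Rightarrow> nat \<Rightarrow> real \<Rightarrow> nat \<Rightarrow> real" where
  "EE k m v s = (if s \<in> Bset k m then (1 - v) * WW k m v else aa k m s * (v^(s+1) - v^(m+2)))"

lemma L4:
  fixes v :: real
  assumes k3: "3 \<le> k" and m1: "1 \<le> m"
  shows "(1 - v) * (\<Sum>t=3..m+2. real (gt k (m+2) t) * v^(t-1)) = (\<Sum>s=1..m. EE k m v s)"
proof -
  have "(\<Sum>t=3..m+2. real (gt k (m+2) t) * v^(t-1)) = (\<Sum>t=3..m+2. (\<Sum>s=1..m. DD k m s t) * v^(t-1))"
    by (rule sum.cong) (use L2[OF k3 m1] in auto)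
  also have "\<dots> = (\<Sum>t=3..m+2. \<Sum>s=1..m. DD k m s t * v^(t-1))" by (simp only: sum_distrib_right)
  also have "\<dots> = (\<Sum>s=1..m. \<Sum>t=3..m+2. DD k m s t * v^(t-1))" by (rule sum.swap)
  finally have e: "(\<Sum>t=3..m+2. real (gt k (m+2) t) * v^(t-1)) = (\<Sum>s=1..m. \<Sum>t=3..m+2. DD k m s t * v^(t-1))" .
  have "(1 - v) * (\<Sum>s=1..m. \<Sum>t=3..m+2. DD k m s t * v^(t-1)) = (\<Sum>s=1..m. (1 - v) * (\<Sum>t=3..m+2. DD k m s t * v^(t-1)))"
    by (simp only: sum_distrib_left)
  also have "\<dots> = (\<Sum>s=1..m. EE k m v s)"
  proof (rule sum.cong)
    fix s assume "s \<in> {1..m}"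
    hence s1: "1 \<le> s" and sm: "s \<le> m" by auto
    show "(1 - v) * (\<Sum>t=3..m+2. DD k m s t * v^(t-1)) = EE k m v s"
    proof (cases "s \<in> Bset k m")
      case True thus ?thesis using L3b[OF True, of v] by (simp add: EE_def)
    next
      case False thus ?thesis using L3nb[OF s1 sm False, of v] by (simp add: EE_def)
    qed
  qed simp
  finally show ?thesis using e by simp
qed

lemma L5:
  fixes v :: real
  assumes k3: "3 \<le> k" and m1: "1 \<le> m"
  shows "(\<Sum>s=1..m. EE k m v s) = v^2 * G k m v - v^(m+2) * real (g k m)
          + (\<Sum>s\<in>Bset k m. (1 - v) * WW k m v - hh k m * (v^(s+1) - v^(m+2)))"
proof -
  let ?X = "\<lambda>s. (1 - v) * WW k m v - hh k m * (v^(s+1) - v^(m+2))"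
  have "(\<Sum>s=1..m. EE k m v s) = (\<Sum>s=1..m. aa k m s * (v^(s+1) - v^(m+2)) + (if s \<in> Bset k m then ?X s else 0))"
  proof (rule sum.cong)
    fix s assume "s \<in> {1..m}"
    hence sm: "s \<le> m" by simp
    show "EE k m v s = aa k m s * (v^(s+1) - v^(m+2)) + (if s \<in> Bset k m then ?X s else 0)"
    proof (cases "s \<in> Bset k m")
      case True
      hence "aa k m s = hh k m" using gt_B[OF k3 _ sm] by (auto simp: Bset_def aa_def hh_def)
      thus ?thesis using True by (simp add: EE_def)
    next
      case False thus ?thesis by (simp add: EE_def)
    qed
  qed simp
  also have "\<dots> = (\<Sum>s=1..m. aa k m s * (v^(s+1) - v^(m+2))) + (\<Sum>s=1..m. if s \<in> Bset k m then ?X s else 0)"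
    by (rule sum.distrib)
  also have "(\<Sum>s=1..m. if s \<in> Bset k m then ?X s else 0) = (\<Sum>s\<in>Bset k m. ?X s)"
  proof -
    have "(\<Sum>s\<in>{s\<in>{1..m}. s \<in> Bset k m}. ?X s) = (\<Sum>s=1..m. if s \<in> Bset k m then ?X s else 0)"
      by (rule sum.inter_filter) simp
    moreover have "{s\<in>{1..m}. s \<in> Bset k m} = Bset k m" by (auto simp: Bset_def)
    ultimately show ?thesis by simp
  qed
  also have "(\<Sum>s=1..m. aa k m s * (v^(s+1) - v^(m+2))) = (\<Sum>s=1..m. v^2 * (aa k m s * v^(s-1)) - v^(m+2) * aa k m s)"
  proof (rule sum.cong)
    fix s assume "s \<in> {1..m}"
    hence "v^(s+1) = v^2 * v^(s-1)" by (simp add: power_add[symmetric])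
    thus "aa k m s * (v^(s+1) - v^(m+2)) = v^2 * (aa k m s * v^(s-1)) - v^(m+2) * aa k m s"
      by (simp add: algebra_simps)
  qed simp
  also have "\<dots> = v^2 * (\<Sum>s=1..m. aa k m s * v^(s-1)) - v^(m+2) * (\<Sum>s=1..m. aa k m s)"
    by (simp only: sum_subtractf sum_distrib_left)
  also have "(\<Sum>s=1..m. aa k m s * v^(s-1)) = G k m v" by (simp add: G_def aa_def)
  also have "(\<Sum>s=1..m. aa k m s) = real (g k m)" using g_part[OF k3 m1] by (simp add: aa_def of_nat_sum)
  finally show ?thesis .
qed


lemma alg_final:
  fixes v Gm gm A1 hp C F1 F2 S Z vn vn1 kk :: real
  assumes v1: "v \<noteq> 1" and hS: "(1 - v) * S = v^2 * Gm - vn * gm + Z"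
    and hZ: "Z = kk * (1 - v) * v * (Gm - A1) + vn1 * C * hp"
  shows "F1 + v * F2 + S = F1 + v * F2 - v * kk * A1 + (v^2 / (1 - v) + kk * v) * Gm
           - vn / (1 - v) * gm + vn1 / (1 - v) * C * hp"
proof -
  have nz: "1 - v \<noteq> 0" using v1 by simp
  define w where "w = 1 / (1 - v)"
  have hw: "w * (1 - v) = 1" unfolding w_def using nz by simp
  have d: "\<And>x. x / (1 - v) = x * w" unfolding w_def by simp
  have "F1 + v * F2 + S = F1 + v * F2 - v * kk * A1 + (v^2 * w + kk * v) * Gm
           - vn * w * gm + vn1 * w * C * hp"
    using hS hZ hw by algebra
  thus ?thesis by (simp only: d)
qed

lemma alg_case1:
  fixes v h Y Q P WW D kk :: real
  assumes v1: "v \<noteq> 1" and Q0: "Q \<noteq> 0" and hP: "(1 - v) * P = Y - Y * Q * v"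
    and hW: "WW = v * D + h * Y * Q"
  shows "kk * ((1 - v) * WW + h * (Y * Q * v)) - h * P = kk * (1 - v) * v * D + (Y * Q) * (kk + (v - 1 / Q) / (1 - v)) * h"
proof -
  have nz: "1 - v \<noteq> 0" using v1 by simp
  have P: "P = (Y - Y * Q * v) / (1 - v)" using hP nz by (simp add: field_simps)
  show ?thesis unfolding P hW using nz Q0 by (simp add: field_simps)
qed

lemma alg_case2:
  fixes v h r R kk :: real
  assumes v1: "v \<noteq> 1" and r0: "r \<noteq> 0" and hR: "(1 - v) * R = v - r * v"
  shows "(kk - 1) * ((1 - v) * (v * (h * R) + h * (r * v^2)) + h * (r * v^3)) - h * (v^2 * R)
       = kk * (1 - v) * v * (h * R) + (r * v^2) * (kk + (v - 1 / r) / (1 - v)) * h"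
proof -
  have nz: "1 - v \<noteq> 0" using v1 by simp
  define E where "E = (r * v^2) * (kk + (v - 1 / r) / (1 - v)) * h"
  have hE: "(1 - v) * E = h * (kk * (1 - v) * r * v^2 + r * v^3 - v^2)"
    unfolding E_def using nz r0 by (simp add: field_simps power2_eq_square power3_eq_cube)
  have "(1 - v) * ((kk - 1) * ((1 - v) * (v * (h * R) + h * (r * v^2)) + h * (r * v^3)) - h * (v^2 * R))
      = (1 - v) * (kk * (1 - v) * v * (h * R) + E)"
    using hR hE by algebra
  hence "(kk - 1) * ((1 - v) * (v * (h * R) + h * (r * v^2)) + h * (r * v^3)) - h * (v^2 * R)
      = kk * (1 - v) * v * (h * R) + E" using nz by simp
  thus ?thesis unfolding E_def .
qed


lemma WW_eq:
  fixes v :: real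
  assumes m1: "1 \<le> m"
  shows "WW k m v = v * (G k m v - aa k m 1) + hh k m * v^(m+1)"
proof -
  have "G k m v = (\<Sum>s=1..m. aa k m s * v^(s-1))" by (simp add: G_def aa_def)
  also have "\<dots> = aa k m 1 * v^(1-1) + (\<Sum>s=Suc 1..m. aa k m s * v^(s-1))"
    by (rule sum.atLeast_Suc_atMost[OF m1])
  finally have e: "G k m v - aa k m 1 = (\<Sum>s=2..m. aa k m s * v^(s-1))" by (simp add: numeral_2_eq_2)
  have "v * (\<Sum>s=2..m. aa k m s * v^(s-1)) = (\<Sum>s=2..m. v * (aa k m s * v^(s-1)))"
    by (simp only: sum_distrib_left)
  also have "\<dots> = (\<Sum>s=2..m. aa k m s * v^s)"
  proof (rule sum.cong)
    fix s assume "s \<in> {2..m}"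
    hence "v * v^(s-1) = v^s" by (simp add: power_eq_if)
    thus "v * (aa k m s * v^(s-1)) = aa k m s * v^s" by (metis mult.left_commute)
  qed simp
  finally show ?thesis using e by (simp add: WW_def)
qed

lemma sum_pow_shift:
  fixes v :: real
  shows "(\<Sum>s=a..m. v^(s+1)) = (\<Sum>t=a+2..m+2. v^(t-1))"
proof -
  have "(\<Sum>t=a+2..m+2. v^(t-1)) = (\<Sum>s=a..m. v^(s+2-1))" by (rule sum.shift_bounds_cl_nat_ivl)
  thus ?thesis by simp
qed


lemma sum_B_split:
  fixes v c h :: real
  shows "(\<Sum>s\<in>B. c - h * (v^(s+1) - w)) = real (card B) * (c + h * w) - h * (\<Sum>s\<in>B. v^(s+1))"
proof -
  have "(\<Sum>s\<in>B. c - h * (v^(s+1) - w)) = (\<Sum>s\<in>B. (c + h * w) - h * v^(s+1))"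
    by (rule sum.cong) (simp_all add: algebra_simps)
  also have "\<dots> = (\<Sum>s\<in>B. c + h * w) - (\<Sum>s\<in>B. h * v^(s+1))" by (rule sum_subtractf)
  also have "(\<Sum>s\<in>B. c + h * w) = real (card B) * (c + h * w)" by simp
  also have "(\<Sum>s\<in>B. h * v^(s+1)) = h * (\<Sum>s\<in>B. v^(s+1))" by (simp only: sum_distrib_left)
  finally show ?thesis .
qed

lemma Z_case1:
  fixes v :: real
  assumes k3: "3 \<le> k" and km: "k \<le> m + 1" and v0: "v \<noteq> 0" and v1: "v \<noteq> 1"
  shows "(\<Sum>s\<in>Bset k m. (1 - v) * WW k m v - hh k m * (v^(s+1) - v^(m+2)))
     = real (k-2) * (1 - v) * v * (G k m v - aa k m 1)
       + v^(m+1) * (real (k-2) + (v - v powi (3 - int k)) / (1 - v)) * hh k m"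
proof -
  have m1: "1 \<le> m" using k3 km by simp
  have Be: "Bset k m = {m+3-k..m}" using k3 km by (auto simp: Bset_def)
  have cB: "card (Bset k m) = k - 2" using Be k3 km by simp
  define P where "P = (\<Sum>s\<in>Bset k m. v^(s+1))"
  define Y where "Y = v^(m+4-k)"
  define Q where "Q = v^(k-3)"
  have Q0: "Q \<noteq> 0" using v0 by (simp add: Q_def)
  have YQ: "v^(m+1) = Y * Q"
  proof -
    have "m + 1 = (m + 4 - k) + (k - 3)" using k3 km by simp
    thus ?thesis unfolding Y_def Q_def by (metis power_add)
  qed
  have YQv: "v^(m+2) = Y * Q * v" using YQ by simp
  have hP: "(1 - v) * P = Y - Y * Q * v"
  proof -
    have Pe: "P = (\<Sum>t=m+3-k+2..m+2. v^(t-1))" unfolding P_def Be by (rule sum_pow_shift)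
    have g: "(1 - v) * (\<Sum>t=m+3-k+2..m+2. v^(t-1)) = v^(m+3-k+2-1) - v^(m+2)"
      by (rule geo) (use k3 km in simp_all)
    have e: "m+3-k+2-1 = m+4-k" using k3 km by simp
    have "(1 - v) * P = v^(m+4-k) - v^(m+2)" by (simp only: Pe g e)
    thus ?thesis by (simp only: YQv Y_def[symmetric])
  qed
  have X: "v powi (3 - int k) = 1 / Q" unfolding Q_def by (rule powi_neg[OF v0 k3])
  have W: "WW k m v = v * (G k m v - aa k m 1) + hh k m * Y * Q" using WW_eq[OF m1, of k v] YQ by simp
  have "(\<Sum>s\<in>Bset k m. (1 - v) * WW k m v - hh k m * (v^(s+1) - v^(m+2)))
      = real (k-2) * ((1 - v) * WW k m v + hh k m * (Y * Q * v)) - hh k m * P"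
    using sum_B_split[of "(1 - v) * WW k m v" "hh k m" v "v^(m+2)" "Bset k m"] cB YQv P_def by simp
  also have "\<dots> = real (k-2) * (1 - v) * v * (G k m v - aa k m 1) + (Y * Q) * (real (k-2) + (v - 1 / Q) / (1 - v)) * hh k m"
    by (rule alg_case1[OF v1 Q0 hP W])
  finally show ?thesis using X YQ by simp
qed


lemma G_split:
  fixes v :: real
  assumes m1: "1 \<le> m"
  shows "G k m v - aa k m 1 = (\<Sum>s=2..m. aa k m s * v^(s-1))"
proof -
  have "G k m v = (\<Sum>s=1..m. aa k m s * v^(s-1))" by (simp add: G_def aa_def)
  also have "\<dots> = aa k m 1 * v^(1-1) + (\<Sum>s=Suc 1..m. aa k m s * v^(s-1))"
    by (rule sum.atLeast_Suc_atMost[OF m1])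
  finally show ?thesis by (simp add: numeral_2_eq_2)
qed

lemma Z_case2:
  fixes v :: real
  assumes k3: "3 \<le> k" and kmm: "k = m + 2" and v0: "v \<noteq> 0" and v1: "v \<noteq> 1"
  shows "(\<Sum>s\<in>Bset k m. (1 - v) * WW k m v - hh k m * (v^(s+1) - v^(m+2)))
     = real (k-2) * (1 - v) * v * (G k m v - aa k m 1)
       + v^(m+1) * (real (k-2) + (v - v powi (3 - int k)) / (1 - v)) * (if 2 \<le> m then hh k m else 0)"
proof -
  have m1: "1 \<le> m" using k3 kmm by simp
  have Be: "Bset k m = {2..m}" using kmm by (auto simp: Bset_def)
  have cB: "card (Bset k m) = m - 1" using Be by simp
  define R where "R = (\<Sum>s=2..m. v^(s-1))"
  define h where "h = hh k m"
  have aaB: "aa k m s = h" if "s \<in> {2..m}" for s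
    using gt_B[OF k3, of s m] that kmm by (simp add: aa_def hh_def h_def)
  have GR: "G k m v - aa k m 1 = h * R"
  proof -
    have "G k m v - aa k m 1 = (\<Sum>s=2..m. aa k m s * v^(s-1))" by (rule G_split[OF m1])
    also have "\<dots> = (\<Sum>s=2..m. h * v^(s-1))" by (rule sum.cong) (simp_all add: aaB)
    also have "\<dots> = h * R" unfolding R_def by (simp only: sum_distrib_left)
    finally show ?thesis .
  qed
  have P: "(\<Sum>s\<in>Bset k m. v^(s+1)) = v^2 * R"
  proof -
    have "(\<Sum>s\<in>Bset k m. v^(s+1)) = (\<Sum>s=2..m. v^2 * v^(s-1))"
    proof (rule sum.cong)
      fix s assume "s \<in> {2..m}"
      hence "s + 1 = 2 + (s - 1)" by simp
      thus "v^(s+1) = v^2 * v^(s-1)" by (metis power_add)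
    qed (simp add: Be)
    also have "\<dots> = v^2 * R" unfolding R_def by (simp only: sum_distrib_left)
    finally show ?thesis .
  qed
  have W: "WW k m v = v * (h * R) + h * v^(m+1)" using WW_eq[OF m1, of k v] GR by (simp add: h_def)
  have split: "(\<Sum>s\<in>Bset k m. (1 - v) * WW k m v - hh k m * (v^(s+1) - v^(m+2)))
      = real (m - 1) * ((1 - v) * WW k m v + h * v^(m+2)) - h * (v^2 * R)"
    using sum_B_split[of "(1 - v) * WW k m v" "hh k m" v "v^(m+2)" "Bset k m"] cB P by (simp add: h_def)
  show ?thesis
  proof (cases "m = 1")
    case True
    have "R = 0" unfolding R_def using True by simp
    moreover have "Bset k m = {}" using Be True by simp
    ultimately show ?thesis using GR True by simp
  next
    case False
    hence m2: "2 \<le> m" using m1 by simp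
    define r where "r = v^(m-1)"
    have r0: "r \<noteq> 0" using v0 by (simp add: r_def)
    have vm: "v^m = r * v"
    proof -
      have "m = (m - 1) + 1" using m1 by simp
      thus ?thesis unfolding r_def by (metis power_add power_one_right)
    qed
    have vm1: "v^(m+1) = r * v^2" using vm by (simp add: power2_eq_square)
    have vm2: "v^(m+2) = r * v^3" using vm by (simp add: power3_eq_cube)
    have hR: "(1 - v) * R = v - r * v"
    proof -
      have "(1 - v) * R = v^(2-1) - v^m" unfolding R_def by (rule geo) (use m1 in simp_all)
      thus ?thesis using vm by simp
    qed
    have X: "v powi (3 - int k) = 1 / r"
      using powi_neg[OF v0 k3] kmm by (simp add: r_def)
    have km: "real (k-2) = real m" using kmm by simp
    have cm: "real (m - 1) = real m - 1" using m1 by simp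
    have "(\<Sum>s\<in>Bset k m. (1 - v) * WW k m v - hh k m * (v^(s+1) - v^(m+2)))
      = (real m - 1) * ((1 - v) * (v * (h * R) + h * (r * v^2)) + h * (r * v^3)) - h * (v^2 * R)"
      using split W vm1 vm2 cm by simp
    also have "\<dots> = real m * (1 - v) * v * (h * R) + (r * v^2) * (real m + (v - 1 / r) / (1 - v)) * h"
      by (rule alg_case2[OF v1 r0 hR])
    finally show ?thesis using GR vm1 X km m2 by (simp add: h_def)
  qed
qed


lemma G_first2:
  fixes v :: real
  assumes n2: "2 \<le> n"
  shows "G k n v = real (gt k n 1) + v * real (gt k n 2) + (\<Sum>t=3..n. real (gt k n t) * v^(t-1))"
proof -
  let ?F = "\<lambda>t. real (gt k n t) * v^(t-1)"
  have n1: "1 \<le> n" using n2 by simp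
  have "G k n v = sum ?F {1..n}" by (simp add: G_def)
  also have "\<dots> = ?F 1 + sum ?F {Suc 1..n}" by (rule sum.atLeast_Suc_atMost[OF n1])
  also have "Suc 1 = (2::nat)" by simp
  also have "sum ?F {2..n} = ?F 2 + sum ?F {Suc 2..n}" by (rule sum.atLeast_Suc_atMost[OF n2])
  also have "Suc 2 = (3::nat)" by simp
  finally show ?thesis by (simp add: mult.commute)
qed

lemma main1m:
  fixes k m :: nat and v :: real
  assumes k3: "3 \<le> k" and km: "k \<le> m + 2" and v0: "v \<noteq> 0" and v1: "v \<noteq> 1"
  shows "G k (m+2) v = real (f (k-1) (m+1)) + v * real (f (k-1) m)
              - v * real (k-2) * real (f (k-1) (m-1))
              + (v^2 / (1 - v) + real (k-2) * v) * G k m v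
              - v^(m+2) / (1 - v) * real (g k m)
              + v^(m+1) / (1 - v) * (real (k-2) + (v - v powi (3 - int k)) / (1 - v))
                  * real (gz k (int (m+2) - 4))"
proof -
  have m1: "1 \<le> m" using k3 km by simp
  define S where "S = (\<Sum>t=3..m+2. real (gt k (m+2) t) * v^(t-1))"
  have g1: "gt k (m+2) 1 = f (k-1) (m+1)" using gt_one[OF k3, of "m+2"] by simp
  have g2: "gt k (m+2) 2 = f (k-1) m" using gt_two[OF k3, of "m+2"] by simp
  have hG: "G k (m+2) v = real (f (k-1) (m+1)) + v * real (f (k-1) m) + S"
    unfolding S_def using G_first2[of "m+2" k v] g1 g2 by simp
  define Z where "Z = (\<Sum>s\<in>Bset k m. (1 - v) * WW k m v - hh k m * (v^(s+1) - v^(m+2)))"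
  have hS: "(1 - v) * S = v^2 * G k m v - v^(m+2) * real (g k m) + Z"
    unfolding S_def Z_def by (simp only: L4[OF k3 m1] L5[OF k3 m1])
  have A1: "aa k m 1 = real (f (k-1) (m-1))" using gt_one[OF k3 m1] by (simp add: aa_def)
  have hZ: "Z = real (k-2) * (1 - v) * v * (G k m v - real (f (k-1) (m-1)))
      + v^(m+1) * (real (k-2) + (v - v powi (3 - int k)) / (1 - v)) * real (gz k (int (m+2) - 4))"
  proof (cases "k \<le> m + 1")
    case True
    have m2: "2 \<le> m" using True k3 by simp
    have hp: "real (gz k (int (m+2) - 4)) = hh k m"
    proof -
      have a: "\<not> (int (m+2) - 4 < 0)" using m2 by simp
      have b: "nat (int (m+2) - 4) = m - 2" using m2 by simp
      show ?thesis unfolding gz_def hh_def by (simp only: a b if_False)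
    qed
    have z: "Z = real (k-2) * (1 - v) * v * (G k m v - aa k m 1)
       + v^(m+1) * (real (k-2) + (v - v powi (3 - int k)) / (1 - v)) * hh k m"
      unfolding Z_def by (rule Z_case1[OF k3 True v0 v1])
    show ?thesis by (simp only: z A1 hp)
  next
    case False
    hence kmm: "k = m + 2" using km by simp
    have hp: "real (gz k (int (m+2) - 4)) = (if 2 \<le> m then hh k m else 0)"
    proof (cases "2 \<le> m")
      case True
      have a: "\<not> (int (m+2) - 4 < 0)" using True by simp
      have b: "nat (int (m+2) - 4) = m - 2" using True by simp
      show ?thesis unfolding gz_def hh_def using True by (simp only: a b if_False if_True)
    next
      case False
      hence a: "int (m+2) - 4 < 0" by simp
      show ?thesis unfolding gz_def using False by (simp only: a if_False if_True of_nat_0)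
    qed
    have z: "Z = real (k-2) * (1 - v) * v * (G k m v - aa k m 1)
       + v^(m+1) * (real (k-2) + (v - v powi (3 - int k)) / (1 - v)) * (if 2 \<le> m then hh k m else 0)"
      unfolding Z_def by (rule Z_case2[OF k3 kmm v0 v1])
    show ?thesis by (simp only: z A1 hp)
  qed
  have "real (f (k-1) (m+1)) + v * real (f (k-1) m) + S
      = real (f (k-1) (m+1)) + v * real (f (k-1) m)
              - v * real (k-2) * real (f (k-1) (m-1))
              + (v^2 / (1 - v) + real (k-2) * v) * G k m v
              - v^(m+2) / (1 - v) * real (g k m)
              + v^(m+1) / (1 - v) * (real (k-2) + (v - v powi (3 - int k)) / (1 - v))
                  * real (gz k (int (m+2) - 4))"
    by (rule alg_final[OF v1 hS hZ])
  thus ?thesis by (simp only: hG)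
qed

lemma main1:
  fixes k n :: nat and v :: real
  assumes k3: "3 \<le> k" and nk: "k \<le> n" and v0: "v \<noteq> 0" and v1: "v \<noteq> 1"
  shows "G k n v = real (f (k-1) (n-1)) + v * real (f (k-1) (n-2))
              - v * real (k-2) * real (f (k-1) (n-3))
              + (v^2 / (1 - v) + real (k-2) * v) * G k (n-2) v
              - v^n / (1 - v) * real (g k (n-2))
              + v^(n-1) / (1 - v) * (real (k-2) + (v - v powi (3 - int k)) / (1 - v))
                  * real (gz k (int n - 4))"
proof -
  define m where "m = n - 2"
  have nm: "n = m + 2" using k3 nk m_def by simp
  have km: "k \<le> m + 2" using nk nm by simp
  have e1: "m + 2 - 1 = m + 1" by simp
  have e2: "m + 2 - 2 = m" by simp
  have e3: "m + 2 - 3 = m - 1" by simp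
  show ?thesis unfolding nm e1 e2 e3 by (rule main1m[OF k3 km v0 v1])
qed

lemma main2:
  fixes k n :: nat and v :: real
  assumes k3: "3 \<le> k" and n1: "1 \<le> n" and nk: "n \<le> k - 1" and v1: "v \<noteq> 1"
  shows "G k n v = real (Inv (n-1)) + (v - v^n) / (1 - v) * real (Inv (n-2))"
proof -
  have g1: "gt k n 1 = Inv (n-1)"
  proof -
    have "{p. invp (n-1) p \<and> avF k p} = {p. invp (n-1) p}"
    proof (rule set_eqI)
      fix p show "p \<in> {p. invp (n-1) p \<and> avF k p} \<longleftrightarrow> p \<in> {p. invp (n-1) p}"
      proof (cases "invp (n-1) p")
        case True
        have "avF k p" unfolding avF_def using nobad_short[of p k] invp_len[OF True] nk n1 by auto
        thus ?thesis using True by simp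
      qed simp
    qed
    thus ?thesis using gt_one[OF k3 n1] f_eq[OF k3] Inv_eq by simp
  qed
  have gt2: "gt k n t = Inv (n-2)" if "2 \<le> t" "t \<le> n" for t
  proof -
    have "{s. invp (n-2) s \<and> avA k s \<and> ok k t s} = {s. invp (n-2) s}"
    proof (rule set_eqI)
      fix p show "p \<in> {s. invp (n-2) s \<and> avA k s \<and> ok k t s} \<longleftrightarrow> p \<in> {s. invp (n-2) s}"
      proof (cases "invp (n-2) p")
        case True
        have nb: "\<not> bad k p j" if "j < length p" for j
          using nobad_short[of p k j] invp_len[OF True] nk n1 that by auto
        have "avF k p" unfolding avF_def using nb by blast
        hence "avA k p" by (rule avF_avA)
        moreover have "ok k t p" unfolding ok_def using nb by blast
        ultimately show ?thesis using True by simp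
      qed simp
    qed
    thus ?thesis using gt_Rm[OF k3 that] Inv_eq by simp
  qed
  have "G k n v = (\<Sum>t=1..n. real (gt k n t) * v^(t-1))" by (simp add: G_def)
  also have "\<dots> = real (gt k n 1) * v^(1-1) + (\<Sum>t=Suc 1..n. real (gt k n t) * v^(t-1))"
    by (rule sum.atLeast_Suc_atMost[OF n1])
  also have "(\<Sum>t=Suc 1..n. real (gt k n t) * v^(t-1)) = (\<Sum>t=2..n. real (Inv (n-2)) * v^(t-1))"
    by (rule sum.cong) (simp_all add: gt2)
  also have "\<dots> = real (Inv (n-2)) * (\<Sum>t=2..n. v^(t-1))" by (simp only: sum_distrib_left)
  also have "(\<Sum>t=2..n. v^(t-1)) = (v - v^n) / (1 - v)"
  proof -
    have "(1 - v) * (\<Sum>t=2..n. v^(t-1)) = v^(2-1) - v^n" by (rule geo) (use n1 in simp_all)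
    moreover have "1 - v \<noteq> 0" using v1 by simp
    ultimately show ?thesis by (simp add: field_simps)
  qed
  finally show ?thesis using g1 by simp
qed

theorem lemma3p3:
  fixes k :: nat
  assumes "k \<ge> 3"
  shows "(\<forall>n \<ge> k. \<forall>v :: real. v \<noteq> 0 \<and> v \<noteq> 1 \<longrightarrow>
            G k n v = real (f (k-1) (n-1)) + v * real (f (k-1) (n-2))
              - v * real (k-2) * real (f (k-1) (n-3))
              + (v^2 / (1 - v) + real (k-2) * v) * G k (n-2) v
              - v^n / (1 - v) * real (g k (n-2))
              + v^(n-1) / (1 - v) * (real (k-2) + (v - v powi (3 - int k)) / (1 - v))
                  * real (gz k (int n - 4)))
       \<and> (\<forall>n. 1 \<le> n \<and> n \<le> k - 1 \<longrightarrow> (\<forall>v :: real. v \<noteq> 1 \<longrightarrow>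
            G k n v = real (Inv (n-1)) + (v - v^n) / (1 - v) * real (Inv (n-2))))"
  using main1[OF assms] main2[OF assms] by blast


end
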